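(* Let $A=kQ_A/I_A$ be a radical square zero algebra and let $B=kQ_B/I_B$ be a radical embedding of $A$ obtained by gluing two idempotents $e_1$ and $e_n$ of $A$. If $\mathrm{char}(k)\neq 2$, then we have $$\mathrm{dim}_k\mathrm{HH}^{1}(A)=\mathrm{dim}_k\mathrm{HH}^{1}(B)-1-\mathrm{kspp}(1,n)-c_B+c_A.$$ In particular, if we glue $e_1$ and $e_n$ from the same block of $A$, then $$\mathrm{dim}_k\mathrm{HH}^{1}(A)=\mathrm{dim}_k\mathrm{HH}^{1}(B)-1-\mathrm{kspp}(1,n);$$ if we glue $e_1$ and $e_n$ from two different blocks of $A$, then $$\mathrm{dim}_k\mathrm{HH}^{1}(A)=\mathrm{dim}_k\mathrm{HH}^{1}(B)-\mathrm{kspp}(1,n)$$ and then $\mathrm{HH}^{1}(A)\simeq \mathrm{HH}^{1}(B)$ as Lie algebras if we exclude the case that there are loops both at $e_1$ and $e_n$. Moreover, if one of the following conditions holds, then these dimension formulas and (in the different-blocks case without loops at both $e_1$ and $e_n$) the Lie algebra isomorphism $\mathrm{HH}^{1}(A)\simeq \mathrm{HH}^{1}(B)$ still hold in the case $\mathrm{char}(k)=2$: \begin{itemize} \item[$(i)$] glue $e_1$ and $e_n$ from the same block of $A$; \item[$(ii)$] glue $e_1\in A_1$ and $e_n\in A_2$ from the different blocks $A_1,A_2$ of $A$ such that both $A_1$ and $A_2$ are not isomorphic to $k[x]/(x^2)$. \end{itemize}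
   Context: $k$ is a field, $A=kQ_A/I_A$ is a finite dimensional algebra with $Q_A$ a finite quiver with vertices $e_1,\dots,e_n$ and $I_A$ admissible; here $A$ is radical square zero (so monomial). We assume $e_1\neq e_n$ and neither is an isolated vertex. $B$ is obtained by gluing $e_1$ and $e_n$: $B$ is the subalgebra of $A$ generated by $f_1=e_1+e_n$, $f_i=e_i$ ($2\le i\le n-1$) and all arrows; $Q_B$ is obtained from $Q_A$ by identifying $e_1,e_n$ into the vertex $f_1$, each arrow $\alpha$ of $Q_A$ corresponding to an arrow $\alpha^*$ of $Q_B$ and each path $p$ to $p^*$; $I_B$ is generated by $I_A$ and all newly formed length-2 paths through $f_1$. $c_A,c_B$ denote the numbers of connected components of $Q_A,Q_B$. For a monomial algebra $\Lambda=kQ/\langle Z\rangle$ ($Z$ a minimal set of monomial relations), $\mathcal{B}$ is the basis of paths containing no element of $Z$, $X\|Y$ denotes pairs of parallel paths, and $\delta^1:k(Q_1\|\mathcal{B})\to k(Z\|\mathcal{B})$, $a\|\gamma\mapsto\sum_{r\in Z} r\|r^{a\|\gamma}$, where $r^{a\|\gamma}$ is the sum of paths in $\mathcal{B}$ obtained by replacing each occurrence of $a$ in $r$ by $\gamma$; $\mathrm{HH}^1(\Lambda)\simeq \mathrm{Ker}(\delta^1)/\mathrm{Im}(\delta^0)$ as Lie algebras. A pair $(\alpha,p)$ with $\alpha$ an arrow of $Q_A$ and $p\in\mathcal{B}_A$ is a special pair if $\alpha$ starts or ends at $e_1$ or $e_n$, $\alpha^*$ is parallel to $p^*$ in $Q_B$,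 and $\alpha$ is not parallel to $p$ in $Q_A$. $Z_{spp}$ is the intersection of the span of all $\alpha^*\|p^*$ for special pairs $(\alpha,p)$ with $\mathrm{Ker}(\delta^1_B)$, and $\mathrm{kspp}(1,n)=\dim_k Z_{spp}$. *)

theory Defs
  imports Complex_Main "HOL-Library.Sublist" "HOL-Library.Function_Algebras"
begin

record ('v, 'a) quiver =
  verts :: "'v set"
  arrs  :: "'a set"
  src   :: "'a \<Rightarrow> 'v"
  tgt   :: "'a \<Rightarrow> 'v"

text \<open>A path is a start vertex together with a list of arrows a1 a2 ... am,
  composed left to right (tgt a_i = src a_(i+1)).  A trivial path (v, []) is the
  idempotent e_v.\<close>
type_synonym ('v, 'a) path = "'v \<times> 'a list"

definition is_path :: "('v, 'a) quiver \<Rightarrow> ('v, 'a) path \<Rightarrow> bool" where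
  "is_path Q p \<longleftrightarrow> fst p \<in> verts Q \<and> set (snd p) \<subseteq> arrs Q
     \<and> (snd p \<noteq> [] \<longrightarrow> src Q (hd (snd p)) = fst p)
     \<and> (\<forall>i. Suc i < length (snd p) \<longrightarrow> tgt Q (snd p ! i) = src Q (snd p ! Suc i))"

definition pend :: "('v, 'a) quiver \<Rightarrow> ('v, 'a) path \<Rightarrow> 'v" where
  "pend Q p = (if snd p = [] then fst p else tgt Q (last (snd p)))"

text \<open>The basis \<B> of a monomial algebra kQ/<Z>: paths containing no element of Z.\<close>
definition basis :: "('v, 'a) quiver \<Rightarrow> ('v, 'a) path set \<Rightarrow> ('v, 'a) path set" where
  "basis Q Z = {p. is_path Q p \<and> \<not> (\<exists>r\<in>Z. sublist (snd r) (snd p))}"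

definition Q0B :: "('v, 'a) quiver \<Rightarrow> ('v, 'a) path set \<Rightarrow> ('v \<times> ('v, 'a) path) set" where
  "Q0B Q Z = {(e, \<gamma>). e \<in> verts Q \<and> \<gamma> \<in> basis Q Z \<and> fst \<gamma> = e \<and> pend Q \<gamma> = e}"

definition Q1B :: "('v, 'a) quiver \<Rightarrow> ('v, 'a) path set \<Rightarrow> ('a \<times> ('v, 'a) path) set" where
  "Q1B Q Z = {(a, \<gamma>). a \<in> arrs Q \<and> \<gamma> \<in> basis Q Z \<and> fst \<gamma> = src Q a \<and> pend Q \<gamma> = tgt Q a}"

definition ZB :: "('v, 'a) quiver \<Rightarrow> ('v, 'a) path set \<Rightarrow> (('v, 'a) path \<times> ('v, 'a) path) set" where
  "ZB Q Z = {(r, \<gamma>). r \<in> Z \<and> \<gamma> \<in> basis Q Z \<and> fst \<gamma> = fst r \<and> pend Q \<gamma> = pend Q r}"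

definition replace_at :: "('v, 'a) path \<Rightarrow> nat \<Rightarrow> ('v, 'a) path \<Rightarrow> ('v, 'a) path" where
  "replace_at p i \<gamma> = (fst p, take i (snd p) @ snd \<gamma> @ drop (Suc i) (snd p))"

text \<open>Coefficient of the basis path \<eta> in p^(a||\<gamma>), the sum of the paths in \<B>
  obtained by replacing each occurrence of a in p by \<gamma>.\<close>
definition repl_coeff ::
  "('v, 'a) quiver \<Rightarrow> ('v, 'a) path set \<Rightarrow> 'a \<Rightarrow> ('v, 'a) path \<Rightarrow> ('v, 'a) path \<Rightarrow> ('v, 'a) path \<Rightarrow> 'k::field" where
  "repl_coeff Q Z a \<gamma> p \<eta> =
     (if \<eta> \<in> basis Q Z
      then of_nat (card {i. i < length (snd p) \<and> snd p ! i = a \<and> replace_at p i \<gamma> = \<eta>})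
      else 0)"

text \<open>Cochains: k(X) is realised as the functions X-type => k vanishing outside X.\<close>
definition supported_on :: "'x set \<Rightarrow> ('x \<Rightarrow> 'k::zero) set" where
  "supported_on X = {f. \<forall>x. x \<notin> X \<longrightarrow> f x = 0}"

definition fscale :: "'k::field \<Rightarrow> ('x \<Rightarrow> 'k) \<Rightarrow> ('x \<Rightarrow> 'k)" where
  "fscale c f = (\<lambda>x. c * f x)"

definition basis_vec :: "'x \<Rightarrow> ('x \<Rightarrow> 'k::{zero,one})" where
  "basis_vec x = (\<lambda>y. if y = x then 1 else 0)"

text \<open>delta^0 : k(Q0||B) -> k(Q1||B),
  e||\<gamma> |-> sum_(a ends at e) a||a\<gamma> - sum_(a starts at e) a||\<gamma>a  (Strametz).\<close>
definition delta0 :: "('v, 'a) quiver \<Rightarrow> ('v, 'a) path set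
     \<Rightarrow> ('v \<times> ('v, 'a) path \<Rightarrow> 'k::field) \<Rightarrow> ('a \<times> ('v, 'a) path \<Rightarrow> 'k)" where
  "delta0 Q Z g = (\<lambda>(a, \<eta>). if (a, \<eta>) \<in> Q1B Q Z then
      (\<Sum>x\<in>Q0B Q Z. g x *
         ((if tgt Q a = fst x \<and> \<eta> = (src Q a, a # snd (snd x)) then 1 else 0)
        - (if src Q a = fst x \<and> \<eta> = (fst (snd x), snd (snd x) @ [a]) then 1 else 0)))
     else 0)"

text \<open>delta^1 : k(Q1||B) -> k(Z||B), a||\<gamma> |-> sum_(r in Z) r||r^(a||\<gamma>).\<close>
definition delta1 :: "('v, 'a) quiver \<Rightarrow> ('v, 'a) path set
     \<Rightarrow> ('a \<times> ('v, 'a) path \<Rightarrow> 'k::field) \<Rightarrow> (('v, 'a) path \<times> ('v, 'a) path \<Rightarrow> 'k)" where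
  "delta1 Q Z f = (\<lambda>(r, \<eta>). if (r, \<eta>) \<in> ZB Q Z then
      (\<Sum>x\<in>Q1B Q Z. f x * repl_coeff Q Z (fst x) (snd x) r \<eta>)
     else 0)"

text \<open>Lie bracket on k(Q1||B): [a||\<gamma>, b||\<delta>] = a||\<gamma>^(b||\<delta>) - b||\<delta>^(a||\<gamma>).\<close>
definition bracket :: "('v, 'a) quiver \<Rightarrow> ('v, 'a) path set
     \<Rightarrow> ('a \<times> ('v, 'a) path \<Rightarrow> 'k::field) \<Rightarrow> ('a \<times> ('v, 'a) path \<Rightarrow> 'k) \<Rightarrow> ('a \<times> ('v, 'a) path \<Rightarrow> 'k)" where
  "bracket Q Z f g = (\<lambda>(c, \<eta>). if (c, \<eta>) \<in> Q1B Q Z then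
      (\<Sum>x\<in>Q1B Q Z. \<Sum>y\<in>Q1B Q Z. f x * g y *
         ((if c = fst x then repl_coeff Q Z (fst y) (snd y) (snd x) \<eta> else 0)
        - (if c = fst y then repl_coeff Q Z (fst x) (snd x) (snd y) \<eta> else 0)))
     else 0)"

definition ker_delta1 :: "('v, 'a) quiver \<Rightarrow> ('v, 'a) path set \<Rightarrow> ('a \<times> ('v, 'a) path \<Rightarrow> 'k::field) set" where
  "ker_delta1 Q Z = {f \<in> supported_on (Q1B Q Z). delta1 Q Z f = (\<lambda>_. 0)}"

definition im_delta0 :: "('v, 'a) quiver \<Rightarrow> ('v, 'a) path set \<Rightarrow> ('a \<times> ('v, 'a) path \<Rightarrow> 'k::field) set" where
  "im_delta0 Q Z = delta0 Q Z ` supported_on (Q0B Q Z)"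

text \<open>dim_k HH^1 = dim_k (Ker delta^1 / Im delta^0) = dim Ker delta^1 - dim Im delta^0
  (Im delta^0 is a subspace of Ker delta^1).\<close>
definition hh1_dim :: "'k::field itself \<Rightarrow> ('v, 'a) quiver \<Rightarrow> ('v, 'a) path set \<Rightarrow> int" where
  "hh1_dim TYPE('k) Q Z =
     int (vector_space.dim (fscale :: 'k \<Rightarrow> _) (ker_delta1 Q Z :: (_ \<Rightarrow> 'k) set))
   - int (vector_space.dim (fscale :: 'k \<Rightarrow> _) (im_delta0 Q Z :: (_ \<Rightarrow> 'k) set))"

text \<open>HH^1(Q1,Z1) and HH^1(Q2,Z2) are isomorphic as Lie algebras: a k-linear map between
  the cocycle spaces inducing a bijective bracket-preserving map of the quotients
  Ker delta^1 / Im delta^0.\<close>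
definition hh1_lie_iso :: "'k::field itself \<Rightarrow> ('v, 'a) quiver \<Rightarrow> ('v, 'a) path set
     \<Rightarrow> ('v, 'a) quiver \<Rightarrow> ('v, 'a) path set \<Rightarrow> bool" where
  "hh1_lie_iso TYPE('k) Q1 Z1 Q2 Z2 \<longleftrightarrow>
    (\<exists>\<phi> :: ('a \<times> ('v, 'a) path \<Rightarrow> 'k) \<Rightarrow> ('a \<times> ('v, 'a) path \<Rightarrow> 'k).
        (\<forall>x\<in>ker_delta1 Q1 Z1. \<phi> x \<in> ker_delta1 Q2 Z2)
      \<and> (\<forall>x\<in>ker_delta1 Q1 Z1. \<forall>y\<in>ker_delta1 Q1 Z1. \<phi> (x + y) = \<phi> x + \<phi> y)
      \<and> (\<forall>c. \<forall>x\<in>ker_delta1 Q1 Z1. \<phi> (fscale c x) = fscale c (\<phi> x))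
      \<and> (\<forall>x\<in>ker_delta1 Q1 Z1. \<phi> x \<in> im_delta0 Q2 Z2 \<longleftrightarrow> x \<in> im_delta0 Q1 Z1)
      \<and> (\<forall>y\<in>ker_delta1 Q2 Z2. \<exists>x\<in>ker_delta1 Q1 Z1. \<phi> x - y \<in> im_delta0 Q2 Z2)
      \<and> (\<forall>x\<in>ker_delta1 Q1 Z1. \<forall>y\<in>ker_delta1 Q1 Z1.
            bracket Q2 Z2 (\<phi> x) (\<phi> y) - \<phi> (bracket Q1 Z1 x y) \<in> im_delta0 Q2 Z2))"

definition rad2_rels :: "('v, 'a) quiver \<Rightarrow> ('v, 'a) path set" where
  "rad2_rels Q = {p. is_path Q p \<and> length (snd p) = 2}"

definition glue_vert :: "'v \<Rightarrow> 'v \<Rightarrow> 'v \<Rightarrow> 'v" where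
  "glue_vert e1 en v = (if v = en then e1 else v)"

text \<open>Q_B: identify e_n with e_1 (the glued vertex f_1 is represented by e_1);
  arrow \<alpha> of Q_A is the arrow \<alpha>* of Q_B.\<close>
definition glue_quiver :: "('v, 'a) quiver \<Rightarrow> 'v \<Rightarrow> 'v \<Rightarrow> ('v, 'a) quiver" where
  "glue_quiver Q e1 en =
     \<lparr> verts = glue_vert e1 en ` verts Q, arrs = arrs Q,
       src = glue_vert e1 en \<circ> src Q, tgt = glue_vert e1 en \<circ> tgt Q \<rparr>"

definition star_path :: "'v \<Rightarrow> 'v \<Rightarrow> ('v, 'a) path \<Rightarrow> ('v, 'a) path" where
  "star_path e1 en p = (glue_vert e1 en (fst p), snd p)"

text \<open>I_B is generated by I_A (i.e. the images p* of the relations of A) and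
  all newly formed length-2 paths through f_1.\<close>
definition glue_rels :: "('v, 'a) quiver \<Rightarrow> 'v \<Rightarrow> 'v \<Rightarrow> ('v, 'a) path set" where
  "glue_rels Q e1 en =
     star_path e1 en ` rad2_rels Q
   \<union> {p. is_path (glue_quiver Q e1 en) p \<and> length (snd p) = 2
         \<and> tgt Q (snd p ! 0) \<noteq> src Q (snd p ! 1)}"

definition conn :: "('v, 'a) quiver \<Rightarrow> 'v rel" where
  "conn Q = ((\<Union>a\<in>arrs Q. {(src Q a, tgt Q a), (tgt Q a, src Q a)})\<^sup>*) \<inter> (verts Q \<times> verts Q)"

definition num_components :: "('v, 'a) quiver \<Rightarrow> nat" where
  "num_components Q = card (verts Q // conn Q)"

definition same_block :: "('v, 'a) quiver \<Rightarrow> 'v \<Rightarrow> 'v \<Rightarrow> bool" where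
  "same_block Q u v \<longleftrightarrow> (u, v) \<in> conn Q"

definition has_loop :: "('v, 'a) quiver \<Rightarrow> 'v \<Rightarrow> bool" where
  "has_loop Q v \<longleftrightarrow> (\<exists>a\<in>arrs Q. src Q a = v \<and> tgt Q a = v)"

text \<open>The block of kQ/rad^2 containing e_v is kQ_C/rad^2 for the component C of v;
  it is isomorphic to k[x]/(x^2) iff Q_C is the quiver with one vertex and one loop.\<close>
definition block_is_dual_numbers :: "('v, 'a) quiver \<Rightarrow> 'v \<Rightarrow> bool" where
  "block_is_dual_numbers Q v \<longleftrightarrow>
     conn Q `` {v} = {v} \<and> card {a \<in> arrs Q. src Q a = v \<or> tgt Q a = v} = 1
     \<and> has_loop Q v"

definition special_pairs :: "('v, 'a) quiver \<Rightarrow> 'v \<Rightarrow> 'v \<Rightarrow> ('a \<times> ('v, 'a) path) set" where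
  "special_pairs Q e1 en =
    {(\<alpha>, p). \<alpha> \<in> arrs Q \<and> p \<in> basis Q (rad2_rels Q)
       \<and> (src Q \<alpha> \<in> {e1, en} \<or> tgt Q \<alpha> \<in> {e1, en})
       \<and> fst (star_path e1 en p) = src (glue_quiver Q e1 en) \<alpha>
       \<and> pend (glue_quiver Q e1 en) (star_path e1 en p) = tgt (glue_quiver Q e1 en) \<alpha>
       \<and> \<not> (fst p = src Q \<alpha> \<and> pend Q p = tgt Q \<alpha>)}"

definition Z_spp :: "'k::field itself \<Rightarrow> ('v, 'a) quiver \<Rightarrow> 'v \<Rightarrow> 'v \<Rightarrow> ('a \<times> ('v, 'a) path \<Rightarrow> 'k) set" where
  "Z_spp TYPE('k) Q e1 en =
     module.span (fscale :: 'k \<Rightarrow> _)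
       ((\<lambda>(\<alpha>, p). basis_vec (\<alpha>, star_path e1 en p)) ` special_pairs Q e1 en)
     \<inter> ker_delta1 (glue_quiver Q e1 en) (glue_rels Q e1 en)"

definition kspp :: "'k::field itself \<Rightarrow> ('v, 'a) quiver \<Rightarrow> 'v \<Rightarrow> 'v \<Rightarrow> nat" where
  "kspp TYPE('k) Q e1 en = vector_space.dim (fscale :: 'k \<Rightarrow> _) (Z_spp TYPE('k) Q e1 en)"

end

theory Submission
  imports Defs
begin

lemma sum_fun_apply: "(sum g A) x = (\<Sum>a\<in>A. g a x)"
  by (induction A rule: infinite_finite_induct) auto

lemma fs_vs: "vector_space (fscale :: 'k::field \<Rightarrow> ('x \<Rightarrow> 'k) \<Rightarrow> ('x \<Rightarrow> 'k))"
  by unfold_locales (auto simp: fscale_def algebra_simps fun_eq_iff)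

interpretation fs: vector_space "fscale :: 'k::field \<Rightarrow> ('x \<Rightarrow> 'k) \<Rightarrow> ('x \<Rightarrow> 'k)"
  by (rule fs_vs)

lemma fscale_apply[simp]: "fscale c f x = c * f x"
  by (simp add: fscale_def)

lemma indep_witness:
  fixes B :: "('x \<Rightarrow> 'k::field) set"
  assumes "finite B"
    and "\<And>b. b \<in> B \<Longrightarrow> \<exists>p. b p \<noteq> 0 \<and> (\<forall>b'\<in>B. b' \<noteq> b \<longrightarrow> b' p = 0)"
  shows "fs.independent B"
proof (rule fs.independent_if_scalars_zero[OF assms(1)])
  fix f :: "('x \<Rightarrow> 'k) \<Rightarrow> 'k" and b
  assume s: "(\<Sum>x\<in>B. fscale (f x) x) = 0" and b: "b \<in> B"
  obtain p where p: "b p \<noteq> 0" "\<forall>b'\<in>B. b' \<noteq> b \<longrightarrow> b' p = 0" using assms(2)[OF b] by blast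
  have "0 = (\<Sum>x\<in>B. fscale (f x) x) p" using s by simp
  also have "\<dots> = (\<Sum>x\<in>B. f x * x p)" by (simp add: sum_fun_apply)
  also have "\<dots> = f b * b p"
    by (rule sum.remove[OF assms(1) b, THEN trans]) (simp add: p(2) sum.neutral)
  finally show "f b = 0" using p(1) by simp
qed

lemma supported_on_subspace: "fs.subspace (supported_on X :: ('x \<Rightarrow> 'k::field) set)"
  unfolding fs.subspace_def supported_on_def by auto

lemma basis_vec_inj: "inj (basis_vec :: 'x \<Rightarrow> ('x \<Rightarrow> 'k::field))"
  unfolding inj_def basis_vec_def fun_eq_iff by (metis one_neq_zero)

lemma span_basis_vec:
  assumes "finite K"
  shows "fs.span (basis_vec ` K) = (supported_on K :: ('x \<Rightarrow> 'k::field) set)"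
proof (rule fs.span_subspace)
  show "basis_vec ` K \<subseteq> (supported_on K :: ('x \<Rightarrow> 'k) set)"
    by (auto simp: supported_on_def basis_vec_def)
  show "fs.subspace (supported_on K :: ('x \<Rightarrow> 'k) set)" by (rule supported_on_subspace)
  show "(supported_on K :: ('x \<Rightarrow> 'k) set) \<subseteq> fs.span (basis_vec ` K)"
  proof
    fix f :: "'x \<Rightarrow> 'k" assume f: "f \<in> supported_on K"
    have "f = (\<Sum>k\<in>K. fscale (f k) (basis_vec k))"
    proof
      fix x
      show "f x = (\<Sum>k\<in>K. fscale (f k) (basis_vec k)) x"
      proof (cases "x \<in> K")
        case True
        then show ?thesis
          by (simp add: sum_fun_apply basis_vec_def assms if_distrib cong: if_cong)
      next
        case False
        then show ?thesis using f
          by (auto simp add: sum_fun_apply basis_vec_def supported_on_def intro!: sum.neutral)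
      qed
    qed
    also have "\<dots> \<in> fs.span (basis_vec ` K)"
      by (intro fs.span_sum fs.span_scale fs.span_base) auto
    finally show "f \<in> fs.span (basis_vec ` K)" .
  qed
qed

lemma indep_basis_vec:
  assumes "finite K"
  shows "fs.independent (basis_vec ` K :: ('x \<Rightarrow> 'k::field) set)"
proof (rule indep_witness)
  show "finite (basis_vec ` K :: ('x \<Rightarrow> 'k) set)" using assms by simp
  fix b :: "'x \<Rightarrow> 'k" assume "b \<in> basis_vec ` K"
  then obtain k where k: "b = basis_vec k" by auto
  show "\<exists>p. b p \<noteq> 0 \<and> (\<forall>b'\<in>basis_vec ` K. b' \<noteq> b \<longrightarrow> b' p = 0)"
    by (rule exI[of _ k]) (auto simp: k basis_vec_def)
qed

lemma dim_supported_on: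
  assumes "finite K"
  shows "fs.dim (supported_on K :: ('x \<Rightarrow> 'k::field) set) = card K"
proof -
  have "fs.dim (supported_on K :: ('x \<Rightarrow> 'k) set) = card (basis_vec ` K :: ('x \<Rightarrow> 'k) set)"
    using fs.dim_eq_card[OF _ indep_basis_vec[OF assms]] span_basis_vec[OF assms]
    by (metis fs.span_span)
  also have "\<dots> = card K" by (rule card_image) (meson basis_vec_inj inj_on_subset subset_UNIV)
  finally show ?thesis .
qed

lemma mh_fs:
  fixes f :: "('x \<Rightarrow> 'k::field) \<Rightarrow> ('y \<Rightarrow> 'k)"
  assumes "\<And>x y. f (x + y) = f x + f y" "\<And>c x. f (fscale c x) = fscale c (f x)"
  shows "module_hom fscale fscale f"
  using assms fs_vs[where 'k='k and 'x='x] fs_vs[where 'k='k and 'x='y]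
  by (simp add: module_hom_def module_hom_axioms_def module_iff_vector_space)

lemma span_disjoint_parts:
  fixes B :: "('x \<Rightarrow> 'k::field) set"
  assumes "fs.independent B" "finite B" "K \<subseteq> B" "x \<in> fs.span K" "x \<in> fs.span (B - K)"
  shows "x = 0"
proof -
  have fK: "finite K" using assms(2,3) finite_subset by blast
  obtain u where u: "x = (\<Sum>v\<in>K. fscale (u v) v)"
    using assms(4) fs.span_finite[OF fK] by auto
  obtain w where w: "x = (\<Sum>v\<in>B - K. fscale (w v) v)"
    using assms(5) fs.span_finite[of "B - K"] assms(2) by auto
  define c where "c v = (if v \<in> K then u v else - w v)" for v
  have "(\<Sum>v\<in>B. fscale (c v) v) = (\<Sum>v\<in>K. fscale (c v) v) + (\<Sum>v\<in>B - K. fscale (c v) v)"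
    using sum.subset_diff[OF assms(3,2)] by (simp add: add.commute)
  also have "(\<Sum>v\<in>K. fscale (c v) v) = x" unfolding u by (intro sum.cong) (auto simp: c_def)
  also have "(\<Sum>v\<in>B - K. fscale (c v) v) = - x" unfolding w
    by (simp add: c_def sum_negf[symmetric] fun_eq_iff sum_fun_apply)
  finally have "(\<Sum>v\<in>B. fscale (c v) v) = x + - x" .
  then have "(\<Sum>v\<in>B. fscale (c v) v) = 0" by (simp only: add.right_inverse)
  then have "\<forall>v\<in>B. c v = 0" using fs.independentD[OF assms(1) assms(2) subset_refl] by blast
  then have "\<forall>v\<in>K. u v = 0" using assms(3) unfolding c_def by (metis subsetD)
  then show ?thesis unfolding u by (simp add: fscale_def fun_eq_iff sum_fun_apply)
qed

lemma rank_nullity: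
  fixes f :: "('x \<Rightarrow> 'k::field) \<Rightarrow> ('y \<Rightarrow> 'k)"
  assumes mh: "module_hom fscale fscale f" and S: "fs.subspace S"
    and fin: "S \<subseteq> fs.span B0" "finite B0"
  shows "fs.dim (f ` S) + fs.dim {x\<in>S. f x = 0} = fs.dim S"
proof -
  interpret h: module_hom "fscale :: 'k \<Rightarrow> ('x \<Rightarrow> 'k) \<Rightarrow> _" "fscale :: 'k \<Rightarrow> ('y \<Rightarrow> 'k) \<Rightarrow> _" f
    by (rule mh)
  define N where "N = {x\<in>S. f x = 0}"
  obtain K where K: "K \<subseteq> N" "fs.independent K" "N \<subseteq> fs.span K" "card K = fs.dim N"
    using fs.basis_exists by blast
  have KS: "K \<subseteq> S" using K(1) N_def by auto
  obtain B where B: "K \<subseteq> B" "B \<subseteq> S" "fs.independent B" "S \<subseteq> fs.span B"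
    using fs.maximal_independent_subset_extend[OF KS K(2)] by blast
  have fB: "finite B"
    using fs.independent_span_bound[OF fin(2) B(3)] B(2) fin(1) by auto
  have dS: "fs.dim S = card B" using fs.basis_card_eq_dim[OF B(2,4,3)] by simp
  define C where "C = B - K"
  have spC: "fs.span C \<subseteq> S" using B(2) S unfolding C_def by (meson Diff_subset fs.span_minimal order_trans)
  have inj: "inj_on f (fs.span C)"
  proof (subst h.inj_on_iff_eq_0[OF fs.subspace_span], intro ballI impI)
    fix x assume x: "x \<in> fs.span C" "f x = 0"
    then have "x \<in> N" using spC N_def by auto
    then have "x \<in> fs.span K" using K(3) by auto
    then show "x = 0" using span_disjoint_parts[OF B(3) fB B(1)] x(1) C_def by auto
  qed
  have indC: "fs.independent (f ` C)"
    by (rule h.independent_injective_image[OF _ inj]) (use fs.independent_mono[OF B(3)] C_def in blast)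
  have cardC: "card (f ` C) = card C"
    by (rule card_image) (meson inj fs.span_superset inj_on_subset)
  have sp: "fs.span (f ` C) = fs.span (f ` S)"
  proof (rule iffD2[OF fs.span_eq], rule conjI)
    show "f ` C \<subseteq> fs.span (f ` S)" using B(2) C_def by (auto intro: fs.span_base)
    have "f ` S \<subseteq> f ` fs.span B" using B(4) by auto
    also have "\<dots> = fs.span (f ` B)" by (simp add: h.span_image)
    also have "\<dots> \<subseteq> fs.span (f ` C)"
    proof (rule fs.span_minimal[OF _ fs.subspace_span], rule subsetI)
      fix y assume "y \<in> f ` B"
      then obtain b where b: "b \<in> B" "y = f b" by auto
      show "y \<in> fs.span (f ` C)"
      proof (cases "b \<in> K")
        case True then have "y = 0" using K(1) N_def b by auto
        then show ?thesis by (simp add: fs.span_zero)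
      next
        case False then show ?thesis using b C_def by (auto intro: fs.span_base)
      qed
    qed
    finally show "f ` S \<subseteq> fs.span (f ` C)" .
  qed
  have "fs.dim (f ` S) = card (f ` C)" using fs.dim_eq_card[OF sp indC] by simp
  moreover have "card C = card B - card K" unfolding C_def
    using B(1) fB by (simp add: card_Diff_subset finite_subset)
  moreover have "card K \<le> card B" using B(1) fB card_mono by blast
  ultimately show ?thesis using dS K(4) N_def cardC by simp
qed

lemma dim_inj_image:
  fixes f :: "('x \<Rightarrow> 'k::field) \<Rightarrow> ('y \<Rightarrow> 'k)"
  assumes mh: "module_hom fscale fscale f" and inj: "inj_on f (fs.span S)"
  shows "fs.dim (f ` S) = fs.dim S"
proof -
  interpret h: module_hom "fscale :: 'k \<Rightarrow> ('x \<Rightarrow> 'k) \<Rightarrow> _" "fscale :: 'k \<Rightarrow> ('y \<Rightarrow> 'k) \<Rightarrow> _" f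
    by (rule mh)
  obtain B where B: "B \<subseteq> S" "fs.independent B" "S \<subseteq> fs.span B" "card B = fs.dim S"
    using fs.basis_exists by blast
  have spB: "fs.span B = fs.span S" using B by (simp add: fs.span_eq fs.span_superset subset_trans)
  have injB: "inj_on f (fs.span B)" using inj spB by simp
  have ind: "fs.independent (f ` B)" by (rule h.independent_injective_image[OF B(2) injB])
  have "fs.span (f ` B) = fs.span (f ` S)" by (simp add: h.span_image spB)
  then have "fs.dim (f ` S) = card (f ` B)" using fs.dim_eq_card[OF _ ind] by simp
  also have "\<dots> = card B" by (rule card_image) (meson injB fs.span_superset inj_on_subset)
  finally show ?thesis using B(4) by simp
qed

lemma dim_insert_fin:
  fixes S :: "('x \<Rightarrow> 'k::field) set"
  assumes "S \<subseteq> fs.span B0" "finite B0" "x \<notin> fs.span S"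
  shows "fs.dim (insert x S) = fs.dim S + 1"
proof -
  obtain B where B: "B \<subseteq> S" "fs.independent B" "S \<subseteq> fs.span B" "card B = fs.dim S"
    using fs.basis_exists by blast
  have fB: "finite B" using fs.independent_span_bound[OF assms(2) B(2)] B(1) assms(1) by auto
  have spB: "fs.span B = fs.span S" using B by (simp add: fs.span_eq fs.span_superset subset_trans)
  have xB: "x \<notin> fs.span B" using assms(3) spB by simp
  have ind: "fs.independent (insert x B)" by (rule fs.independent_insertI[OF xB B(2)])
  have "fs.span (insert x B) = fs.span (insert x S)"
    using spB by (metis fs.span_insert)
  then have "fs.dim (insert x S) = card (insert x B)" using fs.dim_eq_card[OF _ ind] by simp
  also have "\<dots> = card B + 1"
  proof -
    have "x \<notin> B" using xB fs.span_superset by blast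
    then show ?thesis using fB by simp
  qed
  finally show ?thesis using B(4) by simp
qed


lemma supported_onD: "f \<in> supported_on X \<Longrightarrow> x \<notin> X \<Longrightarrow> f x = 0"
  by (simp add: supported_on_def)

definition wfq :: "('v, 'a) quiver \<Rightarrow> bool" where
  "wfq Q \<longleftrightarrow> finite (verts Q) \<and> finite (arrs Q) \<and> (\<forall>a\<in>arrs Q. src Q a \<in> verts Q \<and> tgt Q a \<in> verts Q)"

lemma is_path_Nil[simp]: "is_path Q (v, []) \<longleftrightarrow> v \<in> verts Q"
  by (simp add: is_path_def)

lemma is_path_single[simp]: "is_path Q (v, [a]) \<longleftrightarrow> v \<in> verts Q \<and> a \<in> arrs Q \<and> src Q a = v"
  by (auto simp: is_path_def)

lemma is_path_two[simp]: "is_path Q (v, [a, b]) \<longleftrightarrow> v \<in> verts Q \<and> a \<in> arrs Q \<and> b \<in> arrs Q \<and> src Q a = v \<and> tgt Q a = src Q b"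
  by (auto simp: is_path_def less_Suc_eq)

lemma pend_Nil[simp]: "pend Q (v, []) = v" by (simp add: pend_def)
lemma pend_single[simp]: "pend Q (v, [a]) = tgt Q a" by (simp add: pend_def)
lemma pend_two[simp]: "pend Q (v, [a, b]) = tgt Q b" by (simp add: pend_def)

lemma basis_rad2: "basis Q (rad2_rels Q) = {p. is_path Q p \<and> length (snd p) \<le> 1}"
proof safe
  fix v xs assume p: "(v, xs) \<in> basis Q (rad2_rels Q)"
  then have ip: "is_path Q (v, xs)" by (simp add: basis_def)
  show "length (snd (v, xs)) \<le> 1"
  proof (rule ccontr)
    assume "\<not> length (snd (v, xs)) \<le> 1"
    then obtain a b rest where xs: "xs = a # b # rest"
      by (cases xs; cases "tl xs") auto
    have "(v, [a, b]) \<in> rad2_rels Q"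
      using ip unfolding rad2_rels_def xs by (auto simp: is_path_def)
    moreover have "sublist [a, b] xs" unfolding xs by (intro prefix_imp_sublist) simp
    ultimately show False using p by (auto simp: basis_def)
  qed
  show "is_path Q (v, xs)" using ip .
next
  fix v xs assume "is_path Q (v, xs)" "length (snd (v, xs)) \<le> 1"
  then show "(v, xs) \<in> basis Q (rad2_rels Q)"
    by (auto simp: basis_def rad2_rels_def dest: sublist_length_le)
qed

lemma mem_basis_rad2:
  "p \<in> basis Q (rad2_rels Q) \<longleftrightarrow>
     (\<exists>v. p = (v, []) \<and> v \<in> verts Q) \<or> (\<exists>a. p = (src Q a, [a]) \<and> a \<in> arrs Q \<and> src Q a \<in> verts Q)"
proof -
  obtain v xs where p: "p = (v, xs)" by force
  show ?thesis unfolding basis_rad2 p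
    by (cases xs) auto
qed

lemma len_basis: "p \<in> basis Q (rad2_rels Q) \<Longrightarrow> length (snd p) \<le> 1"
  by (simp add: basis_rad2)

lemma Q1B_iff:
  assumes "wfq Q"
  shows "(a, \<gamma>) \<in> Q1B Q (rad2_rels Q) \<longleftrightarrow> a \<in> arrs Q \<and>
    ((\<gamma> = (src Q a, []) \<and> tgt Q a = src Q a) \<or>
     (\<exists>b. \<gamma> = (src Q a, [b]) \<and> b \<in> arrs Q \<and> src Q b = src Q a \<and> tgt Q b = tgt Q a))"
  using assms unfolding Q1B_def wfq_def mem_basis_rad2 by auto

lemma finite_Q1B:
  assumes "wfq Q"
  shows "finite (Q1B Q (rad2_rels Q))"
proof (rule finite_subset)
  show "Q1B Q (rad2_rels Q) \<subseteq> arrs Q \<times> (verts Q \<times> ({[]} \<union> (\<lambda>b. [b]) ` arrs Q))"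
    using assms by (auto simp: Q1B_iff wfq_def)
  show "finite (arrs Q \<times> (verts Q \<times> ({[]} \<union> (\<lambda>b. [b]) ` arrs Q)))"
    using assms by (auto simp: wfq_def)
qed

lemma Q0B_iff:
  "(e, \<gamma>) \<in> Q0B Q (rad2_rels Q) \<longleftrightarrow> e \<in> verts Q \<and>
    (\<gamma> = (e, []) \<or> (\<exists>b. \<gamma> = (e, [b]) \<and> b \<in> arrs Q \<and> src Q b = e \<and> tgt Q b = e))"
  unfolding Q0B_def mem_basis_rad2 by auto

lemma finite_Q0B:
  assumes "wfq Q"
  shows "finite (Q0B Q (rad2_rels Q))"
proof (rule finite_subset)
  show "Q0B Q (rad2_rels Q) \<subseteq> verts Q \<times> (verts Q \<times> ({[]} \<union> (\<lambda>b. [b]) ` arrs Q))"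
    by (auto simp: Q0B_iff)
  show "finite (verts Q \<times> (verts Q \<times> ({[]} \<union> (\<lambda>b. [b]) ` arrs Q)))"
    using assms by (auto simp: wfq_def)
qed

definition Dm :: "('v, 'a) quiver \<Rightarrow> ('v \<Rightarrow> 'k::field) \<Rightarrow> ('a \<times> ('v, 'a) path \<Rightarrow> 'k)" where
  "Dm Q h = (\<lambda>(a, \<eta>). if (a, \<eta>) \<in> Q1B Q (rad2_rels Q) \<and> snd \<eta> = [a] then h (tgt Q a) - h (src Q a) else 0)"

lemma delta0_eq:
  assumes wf: "wfq Q"
  shows "delta0 Q (rad2_rels Q) g = Dm Q (\<lambda>v. g (v, (v, [])))"
proof (rule ext, clarify)
  fix a and \<eta> :: "('a, 'b) path"
  let ?Z = "Q0B Q (rad2_rels Q)"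
  show "delta0 Q (rad2_rels Q) g (a, \<eta>) = Dm Q (\<lambda>v. g (v, (v, []))) (a, \<eta>)"
  proof (cases "(a, \<eta>) \<in> Q1B Q (rad2_rels Q)")
    case False then show ?thesis by (simp add: delta0_def Dm_def)
  next
    case True
    have a: "a \<in> arrs Q" "src Q a \<in> verts Q" "tgt Q a \<in> verts Q"
      using True wf by (auto simp: Q1B_iff wfq_def)
    have fin: "finite ?Z" by (rule finite_Q0B[OF wf])
    let ?x1 = "(tgt Q a, (tgt Q a, []::'b list))"
    let ?x2 = "(src Q a, (src Q a, []::'b list))"
    have s1: "(\<Sum>x\<in>?Z. g x * (if tgt Q a = fst x \<and> \<eta> = (src Q a, a # snd (snd x)) then 1 else 0))
        = (\<Sum>x\<in>?Z. if x = ?x1 then (if snd \<eta> = [a] then g ?x1 else 0) else 0)"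
      using True wf by (intro sum.cong refl) (auto simp: Q1B_iff Q0B_iff)
    have s2: "(\<Sum>x\<in>?Z. g x * (if src Q a = fst x \<and> \<eta> = (fst (snd x), snd (snd x) @ [a]) then 1 else 0))
        = (\<Sum>x\<in>?Z. if x = ?x2 then (if snd \<eta> = [a] then g ?x2 else 0) else 0)"
      using True wf by (intro sum.cong refl) (auto simp: Q1B_iff Q0B_iff)
    have "delta0 Q (rad2_rels Q) g (a, \<eta>) =
        (\<Sum>x\<in>?Z. g x * (if tgt Q a = fst x \<and> \<eta> = (src Q a, a # snd (snd x)) then 1 else 0))
      - (\<Sum>x\<in>?Z. g x * (if src Q a = fst x \<and> \<eta> = (fst (snd x), snd (snd x) @ [a]) then 1 else 0))"
      using True by (simp add: delta0_def right_diff_distrib sum_subtractf)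
    also have "\<dots> = (if snd \<eta> = [a] then g ?x1 - g ?x2 else 0)"
      unfolding s1 s2 using fin a by (simp add: sum.delta Q0B_iff)
    finally show ?thesis using True by (simp add: Dm_def)
  qed
qed

lemma Dm_cong:
  assumes wf: "wfq Q" and "\<forall>v\<in>verts Q. h v = h' v"
  shows "Dm Q h = Dm Q h'"
  using assms unfolding Dm_def fun_eq_iff wfq_def by (auto simp: Q1B_iff[OF wf])

lemma im_delta0_eq:
  fixes Q :: "('v, 'e) quiver"
  assumes wf: "wfq Q"
  shows "im_delta0 Q (rad2_rels Q) = (Dm Q ` supported_on (verts Q) :: ('e \<times> ('v, 'e) path \<Rightarrow> 'k::field) set)"
proof (unfold im_delta0_def, safe)
  fix g :: "'v \<times> ('v, 'e) path \<Rightarrow> 'k" assume "g \<in> supported_on (Q0B Q (rad2_rels Q))"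
  define h where "h v = (if v \<in> verts Q then g (v, (v, [])) else 0)" for v
  have "delta0 Q (rad2_rels Q) g = Dm Q h"
    unfolding delta0_eq[OF wf] by (rule Dm_cong[OF wf]) (simp add: h_def)
  moreover have "h \<in> supported_on (verts Q)" by (simp add: supported_on_def h_def)
  ultimately show "delta0 Q (rad2_rels Q) g \<in> Dm Q ` supported_on (verts Q)" by blast
next
  fix h :: "'v \<Rightarrow> 'k" assume h: "h \<in> supported_on (verts Q)"
  define g where "g x = (if x \<in> Q0B Q (rad2_rels Q) \<and> snd (snd x) = [] then h (fst x) else 0)" for x
  have "Dm Q h = delta0 Q (rad2_rels Q) g"
    unfolding delta0_eq[OF wf] by (rule Dm_cong[OF wf]) (simp add: g_def Q0B_iff)
  moreover have "g \<in> supported_on (Q0B Q (rad2_rels Q))" by (simp add: supported_on_def g_def)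
  ultimately show "Dm Q h \<in> delta0 Q (rad2_rels Q) ` supported_on (Q0B Q (rad2_rels Q))" by blast
qed

lemma Dm_mh: "module_hom fscale fscale (Dm Q :: ('v \<Rightarrow> 'k::field) \<Rightarrow> _)"
proof (rule mh_fs)
  fix x y :: "'v \<Rightarrow> 'k"
  show "Dm Q (x + y) = Dm Q x + Dm Q y" by (auto simp: Dm_def fun_eq_iff algebra_simps)
  fix c
  show "Dm Q (fscale c x) = fscale c (Dm Q x)" by (auto simp: Dm_def fun_eq_iff algebra_simps)
qed

definition LC :: "('v, 'a) quiver \<Rightarrow> ('v \<Rightarrow> 'k::field) set" where
  "LC Q = {h \<in> supported_on (verts Q). \<forall>a\<in>arrs Q. h (src Q a) = h (tgt Q a)}"

lemma ker_Dm:
  fixes Q :: "('v, 'e) quiver"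
  assumes wf: "wfq Q"
  shows "{h \<in> supported_on (verts Q). (Dm Q h :: ('e \<times> ('v, 'e) path \<Rightarrow> 'k::field)) = 0} = LC Q"
proof safe
  fix h :: "'v \<Rightarrow> 'k" assume h: "h \<in> supported_on (verts Q)" "(Dm Q h :: ('e \<times> ('v, 'e) path \<Rightarrow> 'k)) = 0"
  show "h \<in> LC Q" unfolding LC_def
  proof (safe intro!: h(1))
    fix a assume a: "a \<in> arrs Q"
    have "(a, (src Q a, [a])) \<in> Q1B Q (rad2_rels Q)" using a by (simp add: Q1B_iff[OF wf])
    then have "Dm Q h (a, (src Q a, [a])) = h (tgt Q a) - h (src Q a)" by (simp add: Dm_def)
    then show "h (src Q a) = h (tgt Q a)" using h(2) by simp
  qed
next
  fix h :: "'v \<Rightarrow> 'k" assume "h \<in> LC Q"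
  then show "h \<in> supported_on (verts Q)" "(Dm Q h :: ('e \<times> ('v, 'e) path \<Rightarrow> 'k)) = 0"
    by (auto simp: LC_def Dm_def fun_eq_iff Q1B_iff[OF wf])
qed

lemma dim_im_LC:
  fixes Q :: "('v, 'a) quiver"
  assumes wf: "wfq Q"
  shows "fs.dim (im_delta0 Q (rad2_rels Q) :: ('a \<times> ('v, 'a) path \<Rightarrow> 'k::field) set)
       + fs.dim (LC Q :: ('v \<Rightarrow> 'k) set) = card (verts Q)"
proof -
  have fV: "finite (verts Q)" using wf by (simp add: wfq_def)
  have "fs.dim (Dm Q ` supported_on (verts Q) :: ('a \<times> ('v, 'a) path \<Rightarrow> 'k) set)
      + fs.dim {h \<in> supported_on (verts Q). (Dm Q h :: ('a \<times> ('v, 'a) path \<Rightarrow> 'k)) = 0}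
      = fs.dim (supported_on (verts Q) :: ('v \<Rightarrow> 'k) set)"
    by (rule rank_nullity[OF Dm_mh supported_on_subspace _ finite_imageI[OF fV, of basis_vec]])
       (simp add: span_basis_vec[OF fV])
  then show ?thesis
    by (simp add: im_delta0_eq[OF wf] ker_Dm[OF wf] dim_supported_on[OF fV])
qed

definition edges :: "('v, 'a) quiver \<Rightarrow> 'v rel" where
  "edges Q = (\<Union>a\<in>arrs Q. {(src Q a, tgt Q a), (tgt Q a, src Q a)})"

lemma conn_edges: "conn Q = (edges Q)\<^sup>* \<inter> (verts Q \<times> verts Q)"
  by (simp add: conn_def edges_def)

lemma sym_edges: "sym (edges Q)"
  unfolding edges_def sym_def by auto

lemma equiv_conn:
  assumes wf: "wfq Q"
  shows "equiv (verts Q) (conn Q)"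
proof (rule equivI)
  show "conn Q \<subseteq> verts Q \<times> verts Q" by (auto simp: conn_edges)
  show "refl_on (verts Q) (conn Q)" by (auto simp: conn_edges refl_on_def)
  show "sym (conn Q)" using sym_rtrancl[OF sym_edges, of Q]
    unfolding conn_edges sym_def by blast
  show "trans (conn Q)"
  proof (rule transI)
    fix x y z assume "(x, y) \<in> conn Q" "(y, z) \<in> conn Q"
    then show "(x, z) \<in> conn Q" unfolding conn_edges using rtrancl_trans[of x y "edges Q" z] by blast
  qed
qed

lemma LC_const:
  assumes "h \<in> LC Q" "(u, w) \<in> conn Q"
  shows "h u = h w"
proof -
  have "(u, w) \<in> (edges Q)\<^sup>*" using assms(2) by (simp add: conn_edges)
  then show ?thesis
  proof (induction rule: rtrancl_induct)
    case base then show ?case by simp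
  next
    case (step y z)
    then obtain a where a: "a \<in> arrs Q" "(y, z) = (src Q a, tgt Q a) \<or> (y, z) = (tgt Q a, src Q a)"
      unfolding edges_def by blast
    have "h (src Q a) = h (tgt Q a)" using assms(1) a(1) unfolding LC_def by blast
    then show ?case using step.IH a(2) by auto
  qed
qed

lemma conn_step:
  assumes wf: "wfq Q" and "(v, x) \<in> conn Q" "a \<in> arrs Q"
  shows "x = src Q a \<Longrightarrow> (v, tgt Q a) \<in> conn Q" and "x = tgt Q a \<Longrightarrow> (v, src Q a) \<in> conn Q"
proof -
  have e1: "(src Q a, tgt Q a) \<in> edges Q" "(tgt Q a, src Q a) \<in> edges Q"
    using assms(3) by (auto simp: edges_def)
  have vs: "src Q a \<in> verts Q" "tgt Q a \<in> verts Q" using wf assms(3) by (auto simp: wfq_def)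
  have vv: "v \<in> verts Q" and vx: "(v, x) \<in> (edges Q)\<^sup>*" using assms(2) by (auto simp: conn_edges)
  show "x = src Q a \<Longrightarrow> (v, tgt Q a) \<in> conn Q"
  proof -
    assume "x = src Q a"
    then have "(v, tgt Q a) \<in> (edges Q)\<^sup>*" using rtrancl_into_rtrancl[OF vx] e1(1) by simp
    then show ?thesis using vv vs by (simp add: conn_edges)
  qed
  show "x = tgt Q a \<Longrightarrow> (v, src Q a) \<in> conn Q"
  proof -
    assume "x = tgt Q a"
    then have "(v, src Q a) \<in> (edges Q)\<^sup>*" using rtrancl_into_rtrancl[OF vx] e1(2) by simp
    then show ?thesis using vv vs by (simp add: conn_edges)
  qed
qed

definition ind :: "'v set \<Rightarrow> ('v \<Rightarrow> 'k::field)" where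
  "ind C = (\<lambda>x. if x \<in> C then 1 else 0)"

lemma ind_class_LC:
  assumes wf: "wfq Q" and v: "v \<in> verts Q"
  shows "ind (conn Q `` {v}) \<in> LC Q"
proof -
  have "conn Q `` {v} \<subseteq> verts Q" by (auto simp: conn_edges)
  moreover have "\<forall>a\<in>arrs Q. (src Q a \<in> conn Q `` {v}) = (tgt Q a \<in> conn Q `` {v})"
    using conn_step[OF wf] by blast
  ultimately show ?thesis unfolding LC_def ind_def supported_on_def by auto
qed

lemma dim_LC:
  fixes Q :: "('v, 'a) quiver"
  assumes wf: "wfq Q"
  shows "fs.dim (LC Q :: ('v \<Rightarrow> 'k::field) set) = card (verts Q // conn Q)"
proof -
  let ?V = "verts Q" and ?R = "conn Q"
  have eq: "equiv ?V ?R" by (rule equiv_conn[OF wf])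
  have fV: "finite ?V" using wf by (simp add: wfq_def)
  have fQ: "finite (?V // ?R)" by (rule finite_quotient[OF fV equiv_type[OF eq]])
  define rep where "rep C = (SOME x. x \<in> C)" for C :: "'v set"
  have rep: "rep C \<in> C" if CQ: "C \<in> ?V // ?R" for C
  proof -
    obtain v where "v \<in> ?V" "C = ?R `` {v}" using CQ unfolding quotient_def by blast
    then have "v \<in> C" using equiv_class_self[OF eq] by auto
    then show ?thesis unfolding rep_def by (rule someI)
  qed
  have disj: "x \<notin> C'" if "C \<in> ?V // ?R" "C' \<in> ?V // ?R" "C \<noteq> C'" "x \<in> C" for C C' x
    using quotient_disj[OF eq that(1,2)] that(3,4) by blast
  have inj: "inj_on (ind :: 'v set \<Rightarrow> ('v \<Rightarrow> 'k)) (?V // ?R)"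
  proof (rule inj_onI)
    fix C C' assume C: "C \<in> ?V // ?R" "C' \<in> ?V // ?R" and e: "(ind C :: 'v \<Rightarrow> 'k) = ind C'"
    show "C = C'"
    proof (rule ccontr)
      assume ne: "C \<noteq> C'"
      have "(ind C :: 'v \<Rightarrow> 'k) (rep C) = ind C' (rep C)" using e by simp
      then show False using rep[OF C(1)] disj[OF C ne rep[OF C(1)]] by (simp add: ind_def)
    qed
  qed
  let ?B = "(ind :: 'v set \<Rightarrow> ('v \<Rightarrow> 'k)) ` (?V // ?R)"
  have "card ?B = fs.dim (LC Q :: ('v \<Rightarrow> 'k) set)"
  proof (rule fs.basis_card_eq_dim)
    show "?B \<subseteq> LC Q"
    proof
      fix b assume "b \<in> ?B"
      then obtain C where C: "C \<in> ?V // ?R" "b = ind C" by blast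
      obtain v where "v \<in> ?V" "C = ?R `` {v}" using C(1) unfolding quotient_def by blast
      then show "b \<in> LC Q" using ind_class_LC[OF wf] C(2) by simp
    qed
    show "LC Q \<subseteq> fs.span ?B"
    proof
      fix h :: "'v \<Rightarrow> 'k" assume h: "h \<in> LC Q"
      have "h = (\<Sum>C\<in>?V // ?R. fscale (h (rep C)) (ind C))"
      proof
        fix x
        show "h x = (\<Sum>C\<in>?V // ?R. fscale (h (rep C)) (ind C)) x"
        proof (cases "x \<in> ?V")
          case True
          let ?C0 = "?R `` {x}"
          have C0: "?C0 \<in> ?V // ?R" using True by (rule quotientI)
          have xC0: "x \<in> ?C0" using equiv_class_self[OF eq True] .
          have "(\<Sum>C\<in>?V // ?R. fscale (h (rep C)) (ind C)) x = (\<Sum>C\<in>?V // ?R. h (rep C) * ind C x)"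
            by (simp add: sum_fun_apply)
          also have "\<dots> = (\<Sum>C\<in>?V // ?R. if C = ?C0 then h (rep ?C0) else 0)"
          proof (rule sum.cong[OF refl])
            fix C assume C: "C \<in> ?V // ?R"
            show "h (rep C) * ind C x = (if C = ?C0 then h (rep ?C0) else 0)"
            proof (cases "C = ?C0")
              case True then show ?thesis using xC0 by (simp add: ind_def)
            next
              case False then have "x \<notin> C" using disj[OF C0 C _ xC0] by blast
              then show ?thesis using False by (simp add: ind_def)
            qed
          qed
          also have "\<dots> = h (rep ?C0)" using fQ C0 by simp
          also have "\<dots> = h x"
          proof -
            have "(x, rep ?C0) \<in> ?R" using rep[OF C0] by simp
            then show ?thesis using LC_const[OF h] by simp
          qed
          finally show ?thesis by simp
        next
          case False
          have "\<forall>C\<in>?V // ?R. x \<notin> C" using False Union_quotient[OF eq] by blast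
          moreover have "h x = 0" using h False by (simp add: LC_def supported_on_def)
          ultimately show ?thesis by (simp add: sum_fun_apply ind_def)
        qed
      qed
      also have "\<dots> \<in> fs.span ?B" by (intro fs.span_sum fs.span_scale fs.span_base) auto
      finally show "h \<in> fs.span ?B" .
    qed
    show "fs.independent ?B"
    proof (rule indep_witness)
      show "finite ?B" using fQ by simp
      fix b assume "b \<in> ?B"
      then obtain C where C: "C \<in> ?V // ?R" "b = ind C" by auto
      show "\<exists>p. b p \<noteq> 0 \<and> (\<forall>b'\<in>?B. b' \<noteq> b \<longrightarrow> b' p = 0)"
      proof (intro exI conjI ballI impI)
        show "b (rep C) \<noteq> 0" using rep[OF C(1)] C(2) by (simp add: ind_def)
        fix b' assume "b' \<in> ?B" "b' \<noteq> b"
        then obtain C' where C': "C' \<in> ?V // ?R" "b' = ind C'" "C' \<noteq> C" using C(2) by auto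
        show "b' (rep C) = 0" using disj[OF C(1) C'(1) _ rep[OF C(1)]] C'(2,3) by (auto simp: ind_def)
      qed
    qed
  qed
  then show ?thesis using card_image[OF inj] by simp
qed

lemma repl_coeff_two:
  "repl_coeff Q Z x \<gamma> (u, [a, b]) \<eta> =
    (if \<eta> \<in> basis Q Z then
       of_nat ((if a = x \<and> (u, snd \<gamma> @ [b]) = \<eta> then 1 else 0) + (if b = x \<and> (u, a # snd \<gamma>) = \<eta> then 1 else 0))
     else 0)"
proof -
  let ?P0 = "a = x \<and> (u, snd \<gamma> @ [b]) = \<eta>" and ?P1 = "b = x \<and> (u, a # snd \<gamma>) = \<eta>"
  have "{i. i < length (snd (u, [a, b])) \<and> snd (u, [a, b]) ! i = x \<and> replace_at (u, [a, b]) i \<gamma> = \<eta>}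
      = (if ?P0 then {0} else {}) \<union> (if ?P1 then {1} else {})"
  proof (rule set_eqI)
    fix i :: nat
    show "i \<in> {i. i < length (snd (u, [a, b])) \<and> snd (u, [a, b]) ! i = x \<and> replace_at (u, [a, b]) i \<gamma> = \<eta>}
      \<longleftrightarrow> i \<in> (if ?P0 then {0} else {}) \<union> (if ?P1 then {1} else {})"
      by (cases "i = 0"; cases "i = 1") (auto simp: replace_at_def)
  qed
  moreover have "card ((if ?P0 then {0} else {}) \<union> (if ?P1 then {1::nat} else {}))
      = (if ?P0 then 1 else 0) + (if ?P1 then 1 else 0)"
    by auto
  ultimately show ?thesis unfolding repl_coeff_def by simp
qed

lemma rad2_rels_iff: "r \<in> rad2_rels Q \<longleftrightarrow> (\<exists>u p q. r = (u, [p, q]) \<and> is_path Q (u, [p, q]))"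
proof
  assume "r \<in> rad2_rels Q"
  then have "is_path Q r" "length (snd r) = 2" by (auto simp: rad2_rels_def)
  then show "\<exists>u p q. r = (u, [p, q]) \<and> is_path Q (u, [p, q])"
    by (cases r) (auto simp: length_Suc_conv numeral_2_eq_2)
qed (auto simp: rad2_rels_def)

lemma rad2_mem_two: "(u, [p, q]) \<in> rad2_rels Q \<longleftrightarrow> is_path Q (u, [p, q])"
  by (simp add: rad2_rels_def)

definition KK :: "bool \<Rightarrow> ('v, 'a) quiver \<Rightarrow> ('a \<times> ('v, 'a) path) set" where
  "KK ch2 Q = {x \<in> Q1B Q (rad2_rels Q). \<not> (\<exists>l. x = (l, (src Q l, [])) \<and> src Q l = tgt Q l \<and>
       (\<not> ch2 \<or> (\<exists>c\<in>arrs Q. c \<noteq> l \<and> (src Q c = src Q l \<or> tgt Q c = src Q l))))}"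

lemma KK_sub: "KK ch2 Q \<subseteq> Q1B Q (rad2_rels Q)"
  by (auto simp: KK_def)

lemma delta1_single:
  fixes Q :: "('v, 'e) quiver" and f :: "'e \<times> ('v, 'e) path \<Rightarrow> 'k::field"
  assumes wf: "wfq Q" and rz: "(r, \<eta>) \<in> ZB Q (rad2_rels Q)" and y: "y \<in> Q1B Q (rad2_rels Q)"
    and terms: "\<And>x. x \<in> Q1B Q (rad2_rels Q) \<Longrightarrow> x \<noteq> y \<Longrightarrow> (repl_coeff Q (rad2_rels Q) (fst x) (snd x) r \<eta> :: 'k) = 0"
  shows "delta1 Q (rad2_rels Q) f (r, \<eta>) = f y * repl_coeff Q (rad2_rels Q) (fst y) (snd y) r \<eta>"
proof -
  have "delta1 Q (rad2_rels Q) f (r, \<eta>) = (\<Sum>x\<in>Q1B Q (rad2_rels Q). f x * repl_coeff Q (rad2_rels Q) (fst x) (snd x) r \<eta>)"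
    using rz by (simp add: delta1_def)
  also have "\<dots> = f y * repl_coeff Q (rad2_rels Q) (fst y) (snd y) r \<eta>"
    by (rule sum.remove[OF finite_Q1B[OF wf] y, THEN trans]) (simp add: terms sum.neutral)
  finally show ?thesis .
qed

lemma ker_delta1_eq:
  fixes Q :: "('v, 'e) quiver"
  assumes wf: "wfq Q"
  shows "ker_delta1 Q (rad2_rels Q) = (supported_on (KK ((2::'k::field) = 0) Q) :: ('e \<times> ('v, 'e) path \<Rightarrow> 'k) set)"
proof safe
  fix f :: "'e \<times> ('v, 'e) path \<Rightarrow> 'k"
  assume f: "f \<in> ker_delta1 Q (rad2_rels Q)"
  have fs: "f \<in> supported_on (Q1B Q (rad2_rels Q))" and d: "delta1 Q (rad2_rels Q) f = (\<lambda>_. 0)"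
    using f by (auto simp: ker_delta1_def)
  show "f \<in> supported_on (KK ((2::'k) = 0) Q)"
  unfolding supported_on_def mem_Collect_eq
  proof (intro allI impI)
    fix y assume yK: "y \<notin> KK ((2::'k) = 0) Q"
    show "f y = 0"
    proof (cases "y \<in> Q1B Q (rad2_rels Q)")
      case False then show ?thesis using fs unfolding supported_on_def by blast
    next
      case yQ: True
      then obtain l where yl: "y = (l, (src Q l, []))" and loop: "src Q l = tgt Q l"
        and alt: "(2::'k) \<noteq> 0 \<or> (\<exists>c\<in>arrs Q. c \<noteq> l \<and> (src Q c = src Q l \<or> tgt Q c = src Q l))"
        using yK by (auto simp: KK_def)
      have l: "l \<in> arrs Q" "src Q l \<in> verts Q" using yQ wf by (auto simp: yl Q1B_iff wfq_def)
      let ?v = "src Q l"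
      have xeq: "x = y" if "x \<in> Q1B Q (rad2_rels Q)" "fst x = l" "snd (snd x) = []" for x
        using that by (cases x) (auto simp: yl Q1B_iff[OF wf])
      from alt consider "(2::'k) \<noteq> 0" | c where "c \<in> arrs Q" "c \<noteq> l" "src Q c = ?v"
        | c where "c \<in> arrs Q" "c \<noteq> l" "tgt Q c = ?v" by blast
      then show ?thesis
      proof cases
        case 1
        let ?r = "(?v, [l, l])" and ?\<eta> = "(?v, [l])"
        have rz: "(?r, ?\<eta>) \<in> ZB Q (rad2_rels Q)"
          using l loop by (simp add: ZB_def rad2_mem_two basis_rad2)
        have "0 = delta1 Q (rad2_rels Q) f (?r, ?\<eta>)" using d by simp
        also have "\<dots> = f y * repl_coeff Q (rad2_rels Q) (fst y) (snd y) ?r ?\<eta>"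
          by (rule delta1_single[OF wf rz yQ])
             (use xeq l in \<open>auto simp: repl_coeff_two basis_rad2\<close>)
        also have "\<dots> = f y * 2" using l by (simp add: yl repl_coeff_two basis_rad2)
        finally show ?thesis using 1 by simp
      next
        case 2
        let ?r = "(?v, [l, c])" and ?\<eta> = "(?v, [c])"
        have rz: "(?r, ?\<eta>) \<in> ZB Q (rad2_rels Q)"
          using l loop 2 by (simp add: ZB_def rad2_mem_two basis_rad2)
        have "0 = delta1 Q (rad2_rels Q) f (?r, ?\<eta>)" using d by simp
        also have "\<dots> = f y * repl_coeff Q (rad2_rels Q) (fst y) (snd y) ?r ?\<eta>"
          by (rule delta1_single[OF wf rz yQ])
             (use xeq l 2 in \<open>auto simp: repl_coeff_two basis_rad2\<close>)
        also have "\<dots> = f y" using l 2 loop by (simp add: yl repl_coeff_two basis_rad2)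
        finally show ?thesis by simp
      next
        case 3
        let ?r = "(src Q c, [c, l])" and ?\<eta> = "(src Q c, [c])"
        have cv: "src Q c \<in> verts Q" using 3 wf by (auto simp: wfq_def)
        have rz: "(?r, ?\<eta>) \<in> ZB Q (rad2_rels Q)"
          using l loop 3 cv by (simp add: ZB_def rad2_mem_two basis_rad2)
        have "0 = delta1 Q (rad2_rels Q) f (?r, ?\<eta>)" using d by simp
        also have "\<dots> = f y * repl_coeff Q (rad2_rels Q) (fst y) (snd y) ?r ?\<eta>"
          by (rule delta1_single[OF wf rz yQ])
             (use xeq l 3 in \<open>auto simp: repl_coeff_two basis_rad2\<close>)
        also have "\<dots> = f y" using l 3 loop cv by (simp add: yl repl_coeff_two basis_rad2)
        finally show ?thesis by simp
      qed
    qed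
  qed
next
  fix f :: "'e \<times> ('v, 'e) path \<Rightarrow> 'k"
  assume f: "f \<in> supported_on (KK ((2::'k) = 0) Q)"
  have fs: "f \<in> supported_on (Q1B Q (rad2_rels Q))" using f KK_sub[of "(2::'k) = 0" Q] unfolding supported_on_def by blast
  have d0: "delta1 Q (rad2_rels Q) f (r, \<eta>) = 0" for r \<eta>
    proof (cases "(r, \<eta>) \<in> ZB Q (rad2_rels Q)")
      case False then show ?thesis by (simp add: delta1_def)
    next
      case True
      have "r \<in> rad2_rels Q" using True by (simp add: ZB_def)
      from rad2_rels_iff[THEN iffD1, OF this] obtain u p q where r: "r = (u, [p, q])" "is_path Q (u, [p, q])"
        by blast
      have \<eta>b: "\<eta> \<in> basis Q (rad2_rels Q)" using True by (simp add: ZB_def)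
      have "f x * repl_coeff Q (rad2_rels Q) (fst x) (snd x) r \<eta> = 0" if x: "x \<in> Q1B Q (rad2_rels Q)" for x
      proof (cases "f x = 0")
        case False
        then have xK: "x \<in> KK ((2::'k) = 0) Q" using supported_onD[OF f, of x] by blast
        obtain a \<gamma> where x2: "x = (a, \<gamma>)" by (cases x)
        show ?thesis
        proof (cases "snd \<gamma> = []")
          case False
          have L: "length (snd \<eta>) \<le> 1" using len_basis[OF \<eta>b] .
          have "length (snd \<gamma>) \<ge> 1" using False by (cases "snd \<gamma>") auto
          then have "length (snd (u, snd \<gamma> @ [q])) \<ge> 2" "length (snd (u, p # snd \<gamma>)) \<ge> 2" by simp_all
          then have "(u, snd \<gamma> @ [q]) \<noteq> \<eta>" "(u, p # snd \<gamma>) \<noteq> \<eta>" using L by auto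
          then show ?thesis by (simp add: r x2 repl_coeff_two)
        next
          case True
          then have g: "\<gamma> = (src Q a, [])" and loop: "src Q a = tgt Q a" and aA: "a \<in> arrs Q"
            using x True unfolding x2 Q1B_iff[OF wf] by auto
          have nn: "\<not> ((2::'k) \<noteq> 0 \<or> (\<exists>c\<in>arrs Q. c \<noteq> a \<and> (src Q c = src Q a \<or> tgt Q c = src Q a)))"
            using xK loop unfolding KK_def x2 g by blast
          have ch2: "(2::'k) = 0" and only: "\<forall>c\<in>arrs Q. c \<noteq> a \<longrightarrow> src Q c \<noteq> src Q a \<and> tgt Q c \<noteq> src Q a"
            using nn by auto
          have pq: "tgt Q p = src Q q" "p \<in> arrs Q" "q \<in> arrs Q" using r(2) by simp_all
          have "(p = a \<and> q = a) \<or> (p \<noteq> a \<and> q \<noteq> a)"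
          proof (cases "p = a")
            case True
            then have "src Q q = src Q a" using pq(1) loop by simp
            then have "q = a" using only pq(3) by blast
            then show ?thesis using True by simp
          next
            case False
            then have "tgt Q p \<noteq> src Q a" using only pq(2) by blast
            then have "q \<noteq> a" using pq(1) by auto
            then show ?thesis using False by simp
          qed
          then show ?thesis
          proof
            assume "p = a \<and> q = a"
            then have "(repl_coeff Q (rad2_rels Q) a \<gamma> r \<eta> :: 'k) = (if \<eta> \<in> basis Q (rad2_rels Q) then of_nat (if (u, [a]) = \<eta> then 2 else 0) else 0)"
              by (simp add: r repl_coeff_two g)
            then show ?thesis using ch2 by (simp add: x2)
          next
            assume "p \<noteq> a \<and> q \<noteq> a"
            then show ?thesis by (simp add: r x2 repl_coeff_two)
          qed
        qed
      qed simp
      then have "(\<Sum>x\<in>Q1B Q (rad2_rels Q). f x * repl_coeff Q (rad2_rels Q) (fst x) (snd x) r \<eta>) = 0"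
        by (intro sum.neutral) blast
      then show ?thesis using True unfolding delta1_def by simp
    qed
  have "delta1 Q (rad2_rels Q) f = (\<lambda>_. 0)"
  proof (rule ext)
    fix z :: "('v, 'e) path \<times> ('v, 'e) path"
    show "delta1 Q (rad2_rels Q) f z = 0" using d0[of "fst z" "snd z"] by simp
  qed
  then show "f \<in> ker_delta1 Q (rad2_rels Q)" using fs by (simp add: ker_delta1_def)
qed


lemma hh1_dim_rad2:
  fixes Q :: "('v, 'e) quiver"
  assumes wf: "wfq Q"
  shows "hh1_dim TYPE('k::field) Q (rad2_rels Q) =
           int (card (KK ((2::'k) = 0) Q)) - int (card (verts Q)) + int (fs.dim (LC Q :: ('v \<Rightarrow> 'k) set))"
proof -
  have fK: "finite (KK ((2::'k) = 0) Q)" using finite_Q1B[OF wf] KK_sub finite_subset by blast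
  have k: "fs.dim (ker_delta1 Q (rad2_rels Q) :: ('e \<times> ('v, 'e) path \<Rightarrow> 'k) set) = card (KK ((2::'k) = 0) Q)"
    unfolding ker_delta1_eq[OF wf] by (rule dim_supported_on[OF fK])
  have i: "fs.dim (im_delta0 Q (rad2_rels Q) :: ('e \<times> ('v, 'e) path \<Rightarrow> 'k) set)
       + fs.dim (LC Q :: ('v \<Rightarrow> 'k) set) = card (verts Q)" by (rule dim_im_LC[OF wf])
  show ?thesis unfolding hh1_dim_def k using i by linarith
qed

lemma glue_vert_eq_iff:
  "glue_vert e1 en x = glue_vert e1 en y \<longleftrightarrow> x = y \<or> (x = e1 \<and> y = en) \<or> (x = en \<and> y = e1)"
  by (auto simp: glue_vert_def)

lemma glue_quiver_simps[simp]:
  "verts (glue_quiver Q e1 en) = glue_vert e1 en ` verts Q"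
  "arrs (glue_quiver Q e1 en) = arrs Q"
  "src (glue_quiver Q e1 en) a = glue_vert e1 en (src Q a)"
  "tgt (glue_quiver Q e1 en) a = glue_vert e1 en (tgt Q a)"
  by (simp_all add: glue_quiver_def)

lemma star_path_simps[simp]:
  "fst (star_path e1 en p) = glue_vert e1 en (fst p)" "snd (star_path e1 en p) = snd p"
  by (simp_all add: star_path_def)

lemma pend_star: "pend (glue_quiver Q e1 en) (star_path e1 en p) = glue_vert e1 en (pend Q p)"
  by (simp add: pend_def)

lemma is_path_star:
  assumes "is_path Q p"
  shows "is_path (glue_quiver Q e1 en) (star_path e1 en p)"
  using assms unfolding is_path_def by auto

lemma KK_iff:
  assumes wf: "wfq Q"
  shows "(a, \<gamma>) \<in> KK c Q \<longleftrightarrow> (a, \<gamma>) \<in> Q1B Q (rad2_rels Q) \<and>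
     (snd \<gamma> = [] \<longrightarrow> c \<and> (\<forall>c'\<in>arrs Q. c' \<noteq> a \<longrightarrow> src Q c' \<noteq> src Q a \<and> tgt Q c' \<noteq> src Q a))"
proof (cases "(a, \<gamma>) \<in> Q1B Q (rad2_rels Q)")
  case True
  then have "snd \<gamma> = [] \<longleftrightarrow> \<gamma> = (src Q a, []) \<and> src Q a = tgt Q a" by (auto simp: Q1B_iff[OF wf])
  then show ?thesis using True unfolding KK_def by auto
qed (simp add: KK_def)

lemma supported_on_Int: "supported_on X \<inter> supported_on Y = supported_on (X \<inter> Y)"
  unfolding supported_on_def by auto

lemma LC_subspace: "fs.subspace (LC Q :: ('v \<Rightarrow> 'k::field) set)"
  unfolding fs.subspace_def LC_def supported_on_def by auto

lemma lonely_loop: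
  assumes l: "l \<in> arrs Q" "src Q l = v" "tgt Q l = v" and vV: "v \<in> verts Q"
    and only: "\<forall>c\<in>arrs Q. c \<noteq> l \<longrightarrow> src Q c \<noteq> v \<and> tgt Q c \<noteq> v"
  shows "conn Q `` {v} = {v}" "block_is_dual_numbers Q v"
proof -
  have "w = v" if "(v, w) \<in> (edges Q)\<^sup>*" for w
    using that
  proof (induction rule: rtrancl_induct)
    case (step y z)
    then obtain a where a: "a \<in> arrs Q" "(y, z) = (src Q a, tgt Q a) \<or> (y, z) = (tgt Q a, src Q a)"
      unfolding edges_def by blast
    have "a = l" using a only step.IH by auto
    then show ?case using a l step.IH by auto
  qed simp
  then show c: "conn Q `` {v} = {v}" using vV by (auto simp: conn_edges)
  have "{a \<in> arrs Q. src Q a = v \<or> tgt Q a = v} = {l}" using l only by auto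
  then show "block_is_dual_numbers Q v"
    using c l unfolding block_is_dual_numbers_def has_loop_def by auto
qed

locale glue =
  fixes Q :: "('v, 'e) quiver" and e1 en :: 'v
  assumes wf: "wfq Q" and e1V: "e1 \<in> verts Q" and enV: "en \<in> verts Q" and ne: "e1 \<noteq> en"
    and ni1: "\<exists>a\<in>arrs Q. src Q a = e1 \<or> tgt Q a = e1"
    and nin: "\<exists>a\<in>arrs Q. src Q a = en \<or> tgt Q a = en"
begin

abbreviation "g \<equiv> glue_vert e1 en"
abbreviation "QB \<equiv> glue_quiver Q e1 en"
abbreviation "sp \<equiv> star_path e1 en"
definition st :: "'e \<times> ('v, 'e) path \<Rightarrow> 'e \<times> ('v, 'e) path" where
  "st x = (fst x, sp (snd x))"

lemma st_simps[simp]: "st (a, p) = (a, sp p)" by (simp add: st_def)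

lemma wfB: "wfq QB"
  using wf by (auto simp: wfq_def)

lemma g_e1[simp]: "g e1 = e1" and g_en[simp]: "g en = e1"
  using ne by (auto simp: glue_vert_def)

lemma g_other: "v \<noteq> en \<Longrightarrow> g v = v" by (simp add: glue_vert_def)

lemma gV: "v \<in> verts Q \<Longrightarrow> g v \<in> verts Q"
  using e1V by (simp add: glue_vert_def)

lemma glue_rels_eq: "glue_rels Q e1 en = rad2_rels QB"
proof safe
  fix p assume "p \<in> glue_rels Q e1 en"
  then consider "p \<in> sp ` rad2_rels Q" | "is_path QB p \<and> length (snd p) = 2"
    unfolding glue_rels_def by blast
  then show "p \<in> rad2_rels QB"
  proof cases
    case 1
    then obtain r where "r \<in> rad2_rels Q" "p = sp r" by blast
    then show ?thesis using is_path_star[of Q r e1 en] by (simp add: rad2_rels_def)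
  next
    case 2 then show ?thesis by (simp add: rad2_rels_def)
  qed
next
  fix p assume "p \<in> rad2_rels QB"
  from rad2_rels_iff[THEN iffD1, OF this] obtain w a b where p: "p = (w, [a, b])" "is_path QB (w, [a, b])"
    by blast
  show "p \<in> glue_rels Q e1 en"
  proof (cases "tgt Q a = src Q b")
    case True
    have aA: "a \<in> arrs Q" "b \<in> arrs Q" and w: "w = g (src Q a)" using p(2) by auto
    have "src Q a \<in> verts Q" using wf aA by (auto simp: wfq_def)
    then have "(src Q a, [a, b]) \<in> rad2_rels Q" using True aA by (simp add: rad2_mem_two)
    moreover have "p = sp (src Q a, [a, b])" using p w by (simp add: star_path_def)
    ultimately show ?thesis unfolding glue_rels_def by blast
  next
    case False
    then show ?thesis using p unfolding glue_rels_def by simp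
  qed
qed

lemma card_VB: "card (verts QB) = card (verts Q) - 1"
proof -
  have "g ` verts Q = verts Q - {en}"
  proof (rule set_eqI)
    fix v show "v \<in> g ` verts Q \<longleftrightarrow> v \<in> verts Q - {en}"
    proof
      assume "v \<in> g ` verts Q"
      then obtain u where "u \<in> verts Q" "v = g u" by blast
      then show "v \<in> verts Q - {en}" using e1V ne by (auto simp: glue_vert_def)
    next
      assume v: "v \<in> verts Q - {en}"
      then have "g v = v" using g_other by simp
      then show "v \<in> g ` verts Q" using v by (metis DiffD1 image_eqI)
    qed
  qed
  then show ?thesis using enV wf by (simp add: wfq_def)
qed


abbreviation "QA1 \<equiv> Q1B Q (rad2_rels Q)"
abbreviation "QB1 \<equiv> Q1B QB (rad2_rels QB)"
abbreviation "SP \<equiv> special_pairs Q e1 en"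

lemma A_iff: "(a, \<gamma>) \<in> QA1 \<longleftrightarrow> a \<in> arrs Q \<and>
    ((\<gamma> = (src Q a, []) \<and> tgt Q a = src Q a) \<or>
     (\<exists>b. \<gamma> = (src Q a, [b]) \<and> b \<in> arrs Q \<and> src Q b = src Q a \<and> tgt Q b = tgt Q a))"
  by (rule Q1B_iff[OF wf])

lemma B_iff: "(a, \<gamma>) \<in> QB1 \<longleftrightarrow> a \<in> arrs Q \<and>
    ((\<gamma> = (g (src Q a), []) \<and> g (tgt Q a) = g (src Q a)) \<or>
     (\<exists>b. \<gamma> = (g (src Q a), [b]) \<and> b \<in> arrs Q \<and> g (src Q b) = g (src Q a) \<and> g (tgt Q b) = g (tgt Q a)))"
  using Q1B_iff[OF wfB, of a \<gamma>] by simp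

lemma st_in: "x \<in> QA1 \<Longrightarrow> st x \<in> QB1"
  by (cases x) (auto simp: A_iff B_iff star_path_def)

lemma st_inj: "inj_on st QA1"
proof (rule inj_onI)
  fix x y assume x: "x \<in> QA1" and y: "y \<in> QA1" and e: "st x = st y"
  obtain a \<gamma> b \<delta> where xy: "x = (a, \<gamma>)" "y = (b, \<delta>)" by (cases x, cases y)
  have ab0: "a = b" "sp \<gamma> = sp \<delta>" using e by (simp_all add: xy)
  have ab: "a = b" "snd \<gamma> = snd \<delta>" using ab0 by (auto dest: arg_cong[where f = snd])
  have "fst \<gamma> = src Q a" "fst \<delta> = src Q b" using x y by (auto simp: xy A_iff)
  then show "x = y" using ab by (simp add: xy prod_eq_iff)
qed

lemma SP_iff: "(\<alpha>, p) \<in> SP \<longleftrightarrow> \<alpha> \<in> arrs Q \<and> p \<in> basis Q (rad2_rels Q)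
       \<and> (src Q \<alpha> \<in> {e1, en} \<or> tgt Q \<alpha> \<in> {e1, en})
       \<and> g (fst p) = g (src Q \<alpha>) \<and> g (pend Q p) = g (tgt Q \<alpha>)
       \<and> \<not> (fst p = src Q \<alpha> \<and> pend Q p = tgt Q \<alpha>)"
  unfolding special_pairs_def by (simp add: pend_star)

lemma basis_star: "p \<in> basis Q (rad2_rels Q) \<Longrightarrow> sp p \<in> basis QB (rad2_rels QB)"
  unfolding basis_rad2 using is_path_star[of Q p e1 en] by simp

lemma sp_in: "x \<in> SP \<Longrightarrow> st x \<in> QB1"
proof -
  assume x: "x \<in> SP"
  obtain \<alpha> p where xp: "x = (\<alpha>, p)" by (cases x)
  have "\<alpha> \<in> arrs Q" "p \<in> basis Q (rad2_rels Q)" "g (fst p) = g (src Q \<alpha>)" "g (pend Q p) = g (tgt Q \<alpha>)"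
    using x by (simp_all add: xp SP_iff)
  then show "st x \<in> QB1" unfolding Q1B_def using basis_star by (simp add: xp pend_star)
qed

lemma cover: "y \<in> QB1 \<Longrightarrow> y \<in> st ` QA1 \<or> y \<in> st ` SP"
proof -
  assume y: "y \<in> QB1"
  obtain a \<gamma> where y2: "y = (a, \<gamma>)" by (cases y)
  have aA: "a \<in> arrs Q" using y by (simp add: y2 B_iff)
  have sa: "src Q a \<in> verts Q" "tgt Q a \<in> verts Q" using aA wf by (auto simp: wfq_def)
  from y consider "\<gamma> = (g (src Q a), [])" "g (tgt Q a) = g (src Q a)"
    | b where "\<gamma> = (g (src Q a), [b])" "b \<in> arrs Q" "g (src Q b) = g (src Q a)" "g (tgt Q b) = g (tgt Q a)"
    by (auto simp: y2 B_iff)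
  then show ?thesis
  proof cases
    case 1
    show ?thesis
    proof (cases "tgt Q a = src Q a")
      case True
      then have "(a, (src Q a, [])) \<in> QA1" using aA by (simp add: A_iff)
      moreover have "st (a, (src Q a, [])) = y" using 1 by (simp add: y2 star_path_def)
      ultimately show ?thesis by blast
    next
      case False
      then have ends: "src Q a \<in> {e1, en}" "tgt Q a \<in> {e1, en}"
        using 1(2) glue_vert_eq_iff[of e1 en "tgt Q a" "src Q a"] by auto
      have "(a, (src Q a, [])) \<in> SP"
        using aA sa ends False 1 by (auto simp: SP_iff basis_rad2)
      moreover have "st (a, (src Q a, [])) = y" using 1 by (simp add: y2 star_path_def)
      ultimately show ?thesis by blast
    qed
  next
    case 2
    have sb: "src Q b \<in> verts Q" using 2(2) wf by (auto simp: wfq_def)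
    have sty: "st (a, (src Q b, [b])) = y" using 2 by (simp add: y2 star_path_def)
    show ?thesis
    proof (cases "src Q b = src Q a \<and> tgt Q b = tgt Q a")
      case True
      then have "(a, (src Q b, [b])) \<in> QA1" using aA 2 by (simp add: A_iff)
      then show ?thesis using sty by blast
    next
      case False
      then have "src Q a \<in> {e1, en} \<or> tgt Q a \<in> {e1, en}"
        using 2(3,4) glue_vert_eq_iff[of e1 en "src Q b" "src Q a"] glue_vert_eq_iff[of e1 en "tgt Q b" "tgt Q a"]
        by auto
      then have "(a, (src Q b, [b])) \<in> SP"
        using aA sb 2 False by (auto simp: SP_iff basis_rad2)
      then show ?thesis using sty by blast
    qed
  qed
qed


definition ok :: "bool \<Rightarrow> bool" where
  "ok c \<longleftrightarrow> (c \<longrightarrow> (\<forall>l\<in>arrs Q. src Q l = tgt Q l \<and> src Q l \<in> {e1, en} \<longrightarrow>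
      (\<exists>c'\<in>arrs Q. c' \<noteq> l \<and> (src Q c' = src Q l \<or> tgt Q c' = src Q l))))"

lemma other_arrow:
  assumes l: "l \<in> arrs Q" "src Q l = tgt Q l" "src Q l \<in> {e1, en}"
  shows "\<exists>c'\<in>arrs Q. c' \<noteq> l \<and> (g (src Q c') = g (src Q l) \<or> g (tgt Q c') = g (src Q l))"
proof (cases "src Q l = e1")
  case True
  obtain c' where c': "c' \<in> arrs Q" "src Q c' = en \<or> tgt Q c' = en" using nin by blast
  then have "c' \<noteq> l" using True l(2) ne by auto
  moreover have "g (src Q c') = g (src Q l) \<or> g (tgt Q c') = g (src Q l)"
    using c'(2) True by (metis g_e1 g_en)
  ultimately show ?thesis using c'(1) by blast
next
  case False
  then have sl: "src Q l = en" using l(3) by simp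
  obtain c' where c': "c' \<in> arrs Q" "src Q c' = e1 \<or> tgt Q c' = e1" using ni1 by blast
  then have "c' \<noteq> l" using sl l(2) ne by auto
  moreover have "g (src Q c') = g (src Q l) \<or> g (tgt Q c') = g (src Q l)"
    using c'(2) sl by (metis g_e1 g_en)
  ultimately show ?thesis using c'(1) by blast
qed

lemma KB_iff: "(a, \<gamma>) \<in> KK c QB \<longleftrightarrow> (a, \<gamma>) \<in> QB1 \<and>
     (snd \<gamma> = [] \<longrightarrow> c \<and> (\<forall>c'\<in>arrs Q. c' \<noteq> a \<longrightarrow> g (src Q c') \<noteq> g (src Q a) \<and> g (tgt Q c') \<noteq> g (src Q a)))"
  using KK_iff[OF wfB, of a \<gamma> c] by simp

lemma KA_iff: "(a, \<gamma>) \<in> KK c Q \<longleftrightarrow> (a, \<gamma>) \<in> QA1 \<and>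
     (snd \<gamma> = [] \<longrightarrow> c \<and> (\<forall>c'\<in>arrs Q. c' \<noteq> a \<longrightarrow> src Q c' \<noteq> src Q a \<and> tgt Q c' \<noteq> src Q a))"
  by (rule KK_iff[OF wf])

lemma K_equiv:
  assumes okc: "ok c" and x: "x \<in> QA1"
  shows "st x \<in> KK c QB \<longleftrightarrow> x \<in> KK c Q"
proof -
  obtain a \<gamma> where x2: "x = (a, \<gamma>)" by (cases x)
  have inB: "(a, sp \<gamma>) \<in> QB1" using st_in[OF x] by (simp add: x2)
  have inA: "(a, \<gamma>) \<in> QA1" using x by (simp add: x2)
  show ?thesis
  proof (cases "snd \<gamma> = []")
    case False
    then show ?thesis using inA inB by (simp add: x2 KB_iff KA_iff)
  next
    case True
    then have loop: "src Q a = tgt Q a" and aA: "a \<in> arrs Q" using inA by (auto simp: A_iff)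
    show ?thesis
    proof (cases "src Q a \<in> {e1, en}")
      case True
      obtain c' where c': "c' \<in> arrs Q" "c' \<noteq> a" "g (src Q c') = g (src Q a) \<or> g (tgt Q c') = g (src Q a)"
        using other_arrow[OF aA loop True] by blast
      have nB: "st x \<notin> KK c QB" using c' \<open>snd \<gamma> = []\<close> by (auto simp: x2 KB_iff)
      have nA: "x \<notin> KK c Q"
      proof
        assume xK: "x \<in> KK c Q"
        then have cc: "c" and only: "\<forall>c'\<in>arrs Q. c' \<noteq> a \<longrightarrow> src Q c' \<noteq> src Q a \<and> tgt Q c' \<noteq> src Q a"
          using \<open>snd \<gamma> = []\<close> by (auto simp: x2 KA_iff)
        then show False using okc aA loop True unfolding ok_def by blast
      qed
      show ?thesis using nA nB by blast
    next
      case False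
      then have geq: "g w = g (src Q a) \<longleftrightarrow> w = src Q a" for w
        using glue_vert_eq_iff[of e1 en w "src Q a"] by auto
      show ?thesis using inA inB \<open>snd \<gamma> = []\<close> by (simp add: x2 KB_iff KA_iff geq)
    qed
  qed
qed

lemma K_overlap:
  assumes x: "x \<in> QA1" and y: "y \<in> SP" and e: "st x = st y"
  shows "st x \<notin> KK c QB"
proof -
  obtain a \<gamma> \<alpha> p where xy: "x = (a, \<gamma>)" "y = (\<alpha>, p)" by (cases x, cases y)
  have e2: "\<alpha> = a" "snd p = snd \<gamma>" "g (fst p) = g (fst \<gamma>)"
    using e by (auto simp: xy dest: arg_cong[where f = snd] arg_cong[where f = fst])
  have yS: "(a, p) \<in> SP" using y xy e2 by simp
  have pb: "p \<in> basis Q (rad2_rels Q)" and npar: "\<not> (fst p = src Q a \<and> pend Q p = tgt Q a)"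
    using yS by (simp_all add: SP_iff)
  have xA: "(a, \<gamma>) \<in> QA1" using x xy by simp
  show ?thesis
  proof (cases "snd \<gamma> = []")
    case False
    then obtain b where gb: "\<gamma> = (src Q a, [b])" "src Q b = src Q a" "tgt Q b = tgt Q a"
      using xA by (auto simp: A_iff)
    then have "p = (src Q b, [b])" using pb e2(2) by (auto simp: mem_basis_rad2)
    then have False using npar gb by simp
    then show ?thesis ..
  next
    case True
    then have g0: "\<gamma> = (src Q a, [])" and loop: "src Q a = tgt Q a" and aA: "a \<in> arrs Q"
      using xA by (auto simp: A_iff)
    have p0: "p = (fst p, [])" using e2(2) True by (cases p) simp
    have "fst p \<noteq> src Q a" using npar loop p0 by (metis pend_Nil)
    moreover have "g (fst p) = g (src Q a)" using e2(3) g0 by simp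
    ultimately have "src Q a \<in> {e1, en}" using glue_vert_eq_iff[of e1 en "fst p" "src Q a"] by auto
    then obtain c' where c': "c' \<in> arrs Q" "c' \<noteq> a" "g (src Q c') = g (src Q a) \<or> g (tgt Q c') = g (src Q a)"
      using other_arrow[OF aA loop] by blast
    then show ?thesis using True by (auto simp: xy KB_iff)
  qed
qed

lemma finite_QA1: "finite QA1" by (rule finite_Q1B[OF wf])
lemma finite_QB1: "finite QB1" by (rule finite_Q1B[OF wfB])

lemma card_KB:
  assumes okc: "ok c"
  shows "card (KK c QB) = card (KK c Q) + card (st ` SP \<inter> KK c QB)"
proof -
  have dec: "KK c QB = st ` KK c Q \<union> (st ` SP \<inter> KK c QB)"
  proof (rule set_eqI, rule iffI)
    fix y assume yK: "y \<in> KK c QB"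
    then have "y \<in> QB1" using KK_sub by blast
    then consider "y \<in> st ` QA1" | "y \<in> st ` SP" using cover by blast
    then show "y \<in> st ` KK c Q \<union> (st ` SP \<inter> KK c QB)"
    proof cases
      case 1
      then obtain x where x: "x \<in> QA1" "y = st x" by blast
      then have "x \<in> KK c Q" using K_equiv[OF okc x(1)] yK by simp
      then show ?thesis using x by blast
    qed (use yK in blast)
  next
    fix y assume "y \<in> st ` KK c Q \<union> (st ` SP \<inter> KK c QB)"
    then show "y \<in> KK c QB"
    proof
      assume "y \<in> st ` KK c Q"
      then obtain x where x: "x \<in> KK c Q" "y = st x" by blast
      have "x \<in> QA1" using x(1) KK_sub by blast
      then show ?thesis using K_equiv[OF okc] x by blast
    qed blast
  qed
  have disj: "st ` KK c Q \<inter> (st ` SP \<inter> KK c QB) = {}"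
  proof (rule ccontr)
    assume "st ` KK c Q \<inter> (st ` SP \<inter> KK c QB) \<noteq> {}"
    then obtain x y where x: "x \<in> KK c Q" and y: "y \<in> SP" and e: "st x = st y" and k: "st x \<in> KK c QB"
      by blast
    have "x \<in> QA1" using x KK_sub by blast
    then show False using K_overlap[OF _ y e] k by blast
  qed
  have fKA: "finite (KK c Q)" using finite_QA1 KK_sub finite_subset by blast
  have fKB: "finite (KK c QB)" using finite_QB1 KK_sub finite_subset by blast
  have "card (KK c QB) = card (st ` KK c Q) + card (st ` SP \<inter> KK c QB)"
    using dec disj fKB by (metis card_Un_disjoint finite_Un)
  moreover have "card (st ` KK c Q) = card (KK c Q)"
    by (rule card_image, rule inj_on_subset[OF st_inj KK_sub])
  ultimately show ?thesis by simp
qed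


lemma Zspp_eq: "Z_spp TYPE('k::field) Q e1 en = supported_on (st ` SP \<inter> KK ((2::'k) = 0) QB)"
proof -
  have fe: "(\<lambda>(\<alpha>, p). (basis_vec (\<alpha>, sp p) :: _ \<Rightarrow> 'k)) = basis_vec \<circ> st"
    by (rule ext) (auto simp: st_def split: prod.splits)
  have im: "(\<lambda>(\<alpha>, p). (basis_vec (\<alpha>, sp p) :: _ \<Rightarrow> 'k)) ` SP = basis_vec ` (st ` SP)"
    unfolding fe by (simp add: image_comp)
  have fin: "finite (st ` SP)" using sp_in finite_QB1 by (meson finite_subset image_subsetI)
  show ?thesis
    unfolding Z_spp_def im span_basis_vec[OF fin] glue_rels_eq ker_delta1_eq[OF wfB] supported_on_Int ..
qed

lemma kspp_eq: "kspp TYPE('k::field) Q e1 en = card (st ` SP \<inter> KK ((2::'k) = 0) QB)"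
proof -
  have fin: "finite (st ` SP \<inter> KK ((2::'k) = 0) QB)"
    using sp_in finite_QB1 by (meson finite_subset image_subsetI inf.coboundedI1)
  show ?thesis unfolding kspp_def Zspp_eq by (rule dim_supported_on[OF fin])
qed

definition Phi :: "('v \<Rightarrow> 'k::field) \<Rightarrow> ('v \<Rightarrow> 'k)" where
  "Phi h = (\<lambda>v. if v \<in> verts Q then h (g v) else 0)"

definition LCp :: "('v \<Rightarrow> 'k::field) set" where
  "LCp = {h \<in> LC Q. h e1 = h en}"

lemma Phi_mh: "module_hom fscale fscale (Phi :: ('v \<Rightarrow> 'k::field) \<Rightarrow> _)"
proof (rule mh_fs)
  fix x y :: "'v \<Rightarrow> 'k"
  show "Phi (x + y) = Phi x + Phi y" by (auto simp: Phi_def fun_eq_iff)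
  fix c
  show "Phi (fscale c x) = fscale c (Phi x)" by (auto simp: Phi_def fun_eq_iff)
qed

lemma Phi_image: "Phi ` (LC QB :: ('v \<Rightarrow> 'k::field) set) = LCp"
proof safe
  fix h :: "'v \<Rightarrow> 'k" assume h: "h \<in> LC QB"
  show "Phi h \<in> LCp" unfolding LCp_def LC_def
  proof (intro CollectI conjI ballI)
    show "Phi h \<in> supported_on (verts Q)" by (simp add: Phi_def supported_on_def)
    fix a assume a: "a \<in> arrs Q"
    then have "h (g (src Q a)) = h (g (tgt Q a))" using h by (auto simp: LC_def)
    then show "Phi h (src Q a) = Phi h (tgt Q a)" using a wf by (auto simp: Phi_def wfq_def)
  next
    show "Phi h e1 = Phi h en" using e1V enV by (simp add: Phi_def)
  qed
next
  fix h :: "'v \<Rightarrow> 'k" assume h: "h \<in> LCp"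
  define hB where "hB w = (if w \<in> verts QB then h w else 0)" for w
  have hg: "h (g v) = h v" for v
    using h by (cases "v = en") (auto simp: LCp_def g_other)
  have "Phi hB = h"
  proof
    fix v show "Phi hB v = h v"
    proof (cases "v \<in> verts Q")
      case True then show ?thesis by (simp add: Phi_def hB_def hg)
    next
      case False then show ?thesis using h by (simp add: Phi_def LCp_def LC_def supported_on_def)
    qed
  qed
  moreover have "hB \<in> LC QB"
    unfolding LC_def
  proof (intro CollectI conjI ballI)
    show "hB \<in> supported_on (verts QB)" by (simp add: hB_def supported_on_def)
    fix a assume a: "a \<in> arrs QB"
    then have "h (src Q a) = h (tgt Q a)" using h by (auto simp: LCp_def LC_def)
    moreover have "g (src Q a) \<in> verts QB" "g (tgt Q a) \<in> verts QB" using a wf by (auto simp: wfq_def)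
    ultimately show "hB (src QB a) = hB (tgt QB a)" by (simp add: hB_def hg)
  qed
  ultimately show "h \<in> Phi ` LC QB" by blast
qed

lemma Phi_inj: "inj_on (Phi :: ('v \<Rightarrow> 'k::field) \<Rightarrow> _) (LC QB)"
proof (rule inj_onI)
  fix x y :: "'v \<Rightarrow> 'k" assume x: "x \<in> LC QB" and y: "y \<in> LC QB" and e: "Phi x = Phi y"
  show "x = y"
  proof
    fix w show "x w = y w"
    proof (cases "w \<in> verts QB")
      case True
      then obtain v where v: "v \<in> verts Q" "w = g v" by auto
      have "Phi x v = Phi y v" using e by simp
      then show ?thesis using v by (simp add: Phi_def)
    next
      case False then show ?thesis using x y by (simp add: LC_def supported_on_def)
    qed
  qed
qed

lemma dim_LCB: "fs.dim (LC QB :: ('v \<Rightarrow> 'k::field) set) = fs.dim (LCp :: ('v \<Rightarrow> 'k) set)"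
proof -
  have sp: "fs.span (LC QB :: ('v \<Rightarrow> 'k) set) = LC QB" using LC_subspace by (simp add: fs.span_eq_iff)
  have "inj_on (Phi :: ('v \<Rightarrow> 'k) \<Rightarrow> _) (fs.span (LC QB))" unfolding sp by (rule Phi_inj)
  from dim_inj_image[OF Phi_mh this] show ?thesis by (simp add: Phi_image)
qed

lemma LCp_same: "same_block Q e1 en \<Longrightarrow> (LCp :: ('v \<Rightarrow> 'k::field) set) = LC Q"
proof -
  assume "same_block Q e1 en"
  then have c: "(e1, en) \<in> conn Q" by (simp add: same_block_def)
  show ?thesis unfolding LCp_def
  proof safe
    fix h :: "'v \<Rightarrow> 'k" assume "h \<in> LC Q" then show "h e1 = h en" using LC_const[OF _ c] by blast
  qed
qed

lemma i1_LC: "(ind (conn Q `` {e1}) :: 'v \<Rightarrow> 'k::field) \<in> LC Q"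
  by (rule ind_class_LC[OF wf e1V])

lemma dim_LC_diff:
  assumes nsb: "\<not> same_block Q e1 en"
  shows "fs.dim (LC Q :: ('v \<Rightarrow> 'k::field) set) = fs.dim (LCp :: ('v \<Rightarrow> 'k) set) + 1"
proof -
  let ?i = "ind (conn Q `` {e1}) :: 'v \<Rightarrow> 'k"
  have i_e1: "?i e1 = 1" using equiv_class_self[OF equiv_conn[OF wf] e1V] by (simp add: ind_def)
  have i_en: "?i en = 0" using nsb by (simp add: ind_def same_block_def)
  have subLCp: "fs.subspace (LCp :: ('v \<Rightarrow> 'k) set)"
    using LC_subspace unfolding LCp_def fs.subspace_def by auto
  have spLCp: "fs.span (LCp :: ('v \<Rightarrow> 'k) set) = LCp" using subLCp by (simp add: fs.span_eq_iff)
  have notin: "?i \<notin> fs.span LCp" unfolding spLCp using i_e1 i_en by (simp add: LCp_def)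
  have "fs.span (insert ?i LCp) = LC Q"
  proof (rule fs.span_subspace)
    show "insert ?i LCp \<subseteq> LC Q" using i1_LC by (auto simp: LCp_def)
    show "fs.subspace (LC Q :: ('v \<Rightarrow> 'k) set)" by (rule LC_subspace)
    show "LC Q \<subseteq> fs.span (insert ?i LCp)"
    proof
      fix h :: "'v \<Rightarrow> 'k" assume h: "h \<in> LC Q"
      let ?h' = "h - fscale (h e1 - h en) ?i"
      have "?h' \<in> LC Q" by (rule fs.subspace_diff[OF LC_subspace h fs.subspace_scale[OF LC_subspace i1_LC]])
      moreover have "?h' e1 = ?h' en" using i_e1 i_en by simp
      ultimately have h'L: "?h' \<in> LCp" by (simp add: LCp_def)
      have "h = ?h' + fscale (h e1 - h en) ?i" by simp
      also have "\<dots> \<in> fs.span (insert ?i LCp)"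
        by (intro fs.span_add fs.span_scale fs.span_base) (auto simp: h'L)
      finally show "h \<in> fs.span (insert ?i LCp)" .
    qed
  qed
  then have "fs.dim (LC Q :: ('v \<Rightarrow> 'k) set) = fs.dim (insert ?i LCp)" by (metis fs.dim_span)
  also have "\<dots> = fs.dim (LCp :: ('v \<Rightarrow> 'k) set) + 1"
  proof (rule dim_insert_fin[OF _ _ notin])
    have fV: "finite (verts Q)" using wf by (simp add: wfq_def)
    show "LCp \<subseteq> fs.span (basis_vec ` verts Q)" unfolding span_basis_vec[OF fV]
      by (auto simp: LCp_def LC_def)
    show "finite (basis_vec ` verts Q)" using fV by simp
  qed
  finally show ?thesis .
qed


lemma num_comp_A: "int (num_components Q) = int (fs.dim (LC Q :: ('v \<Rightarrow> 'k::field) set))"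
  by (simp add: num_components_def dim_LC[OF wf])

lemma num_comp_B: "int (num_components QB) = int (fs.dim (LC QB :: ('v \<Rightarrow> 'k::field) set))"
  by (simp add: num_components_def dim_LC[OF wfB])

lemma dims_main:
  assumes okc: "ok ((2::'k::field) = 0)"
  shows "hh1_dim TYPE('k) Q (rad2_rels Q) =
     hh1_dim TYPE('k) QB (glue_rels Q e1 en) - 1 - int (kspp TYPE('k) Q e1 en)
       - int (num_components QB) + int (num_components Q)"
proof -
  have V1: "card (verts Q) \<ge> 1" using e1V wf by (simp add: wfq_def Suc_le_eq card_gt_0_iff) blast
  show ?thesis
    unfolding glue_rels_eq hh1_dim_rad2[OF wf] hh1_dim_rad2[OF wfB] card_KB[OF okc] kspp_eq card_VB
      num_comp_A[where 'k='k] num_comp_B[where 'k='k]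
    using V1 by simp
qed

lemma comp_same: "same_block Q e1 en \<Longrightarrow> num_components QB = num_components Q"
  using num_comp_A[where 'k=real] num_comp_B[where 'k=real] dim_LCB[where 'k=real] LCp_same[where 'k=real]
  by simp

lemma comp_diff: "\<not> same_block Q e1 en \<Longrightarrow> int (num_components Q) = int (num_components QB) + 1"
  using num_comp_A[where 'k=real] num_comp_B[where 'k=real] dim_LCB[where 'k=real] dim_LC_diff[where 'k=real]
  by simp

lemma good_ok:
  assumes "(2::'k::field) \<noteq> 0 \<or> same_block Q e1 en
                 \<or> (\<not> same_block Q e1 en \<and> \<not> block_is_dual_numbers Q e1 \<and> \<not> block_is_dual_numbers Q en)"
  shows "ok ((2::'k) = 0)"
  unfolding ok_def
proof (intro impI ballI)
  fix l assume c2: "(2::'k) = 0" and l: "l \<in> arrs Q" and lp: "src Q l = tgt Q l \<and> src Q l \<in> {e1, en}"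
  show "\<exists>c'\<in>arrs Q. c' \<noteq> l \<and> (src Q c' = src Q l \<or> tgt Q c' = src Q l)"
  proof (rule ccontr)
    assume "\<not> ?thesis"
    then have only: "\<forall>c\<in>arrs Q. c \<noteq> l \<longrightarrow> src Q c \<noteq> src Q l \<and> tgt Q c \<noteq> src Q l" by blast
    have vV: "src Q l \<in> verts Q" using lp e1V enV by auto
    note ll = lonely_loop[OF l refl lp[THEN conjunct1, symmetric] vV only]
    have nsb: "\<not> same_block Q e1 en"
    proof
      assume sb: "same_block Q e1 en"
      have eq: "equiv (verts Q) (conn Q)" by (rule equiv_conn[OF wf])
      have "(e1, en) \<in> conn Q" using sb by (simp add: same_block_def)
      moreover then have "(en, e1) \<in> conn Q" using eq by (meson equivE symD)
      ultimately have c1: "(e1, en) \<in> conn Q" and c2: "(en, e1) \<in> conn Q" by blast+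
      have "src Q l = e1 \<or> src Q l = en" using lp by auto
      then show False
      proof
        assume "src Q l = e1"
        then have "en \<in> conn Q `` {src Q l}" using c1 by simp
        then have "en = src Q l" using ll(1) by blast
        then show False using ne \<open>src Q l = e1\<close> by simp
      next
        assume "src Q l = en"
        then have "e1 \<in> conn Q `` {src Q l}" using c2 by simp
        then have "e1 = src Q l" using ll(1) by blast
        then show False using ne \<open>src Q l = en\<close> by simp
      qed
    qed
    have "block_is_dual_numbers Q e1 \<or> block_is_dual_numbers Q en" using ll(2) lp by auto
    then show False using assms c2 nsb by auto
  qed
qed

end


context glue
begin

lemma conn_arrow: "a \<in> arrs Q \<Longrightarrow> (src Q a, tgt Q a) \<in> conn Q"
proof -
  assume a: "a \<in> arrs Q"
  have "src Q a \<in> verts Q" using a wf by (auto simp: wfq_def)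
  then have "(src Q a, src Q a) \<in> conn Q" using equiv_conn[OF wf] by (meson equiv_class_self Image_singleton_iff)
  then show ?thesis using conn_step(1)[OF wf _ a] by blast
qed

lemma conn_sym: "(x, y) \<in> conn Q \<Longrightarrow> (y, x) \<in> conn Q"
  using equiv_conn[OF wf] by (meson equivE symD)

lemma conn_trans: "(x, y) \<in> conn Q \<Longrightarrow> (y, z) \<in> conn Q \<Longrightarrow> (x, z) \<in> conn Q"
  using equiv_conn[OF wf] by (meson equivE transD)

lemma conn_basis: "p \<in> basis Q (rad2_rels Q) \<Longrightarrow> (fst p, pend Q p) \<in> conn Q"
proof -
  assume "p \<in> basis Q (rad2_rels Q)"
  then consider v where "p = (v, [])" "v \<in> verts Q" | a where "p = (src Q a, [a])" "a \<in> arrs Q"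
    unfolding mem_basis_rad2 by blast
  then show ?thesis
  proof cases
    case 1
    have "(v, v) \<in> conn Q" using equiv_class_self[OF equiv_conn[OF wf] 1(2)] by simp
    then show ?thesis using 1 by simp
  next
    case 2 then show ?thesis using conn_arrow by simp
  qed
qed

lemma not_conn_ends:
  assumes nsb: "\<not> same_block Q e1 en" and "x \<in> {e1, en}" "y \<in> {e1, en}" "(x, y) \<in> conn Q"
  shows "x = y"
  using assms conn_sym unfolding same_block_def by auto

lemma SP_KB_empty:
  assumes nsb: "\<not> same_block Q e1 en" and nl: "\<not> (has_loop Q e1 \<and> has_loop Q en)"
  shows "st ` SP \<inter> KK c QB = {}"
proof (rule ccontr)
  assume "st ` SP \<inter> KK c QB \<noteq> {}"
  then obtain z where "z \<in> st ` SP \<inter> KK c QB" by blast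
  then obtain x where x: "x \<in> SP" "st x \<in> KK c QB" by blast
  obtain \<alpha> p where xp: "x = (\<alpha>, p)" by (cases x)
  have y: "(\<alpha>, p) \<in> SP" and k: "st (\<alpha>, p) \<in> KK c QB" using x xp by simp_all
  have \<alpha>A: "\<alpha> \<in> arrs Q" and pb: "p \<in> basis Q (rad2_rels Q)"
    and gs: "g (fst p) = g (src Q \<alpha>)" and gt: "g (pend Q p) = g (tgt Q \<alpha>)"
    and npar: "\<not> (fst p = src Q \<alpha> \<and> pend Q p = tgt Q \<alpha>)"
    using y by (simp_all add: SP_iff)
  have ca: "(src Q \<alpha>, tgt Q \<alpha>) \<in> conn Q" by (rule conn_arrow[OF \<alpha>A])
  have cp: "(fst p, pend Q p) \<in> conn Q" by (rule conn_basis[OF pb])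
  have geq: "x = y \<or> (x \<in> {e1, en} \<and> y \<in> {e1, en})" if "g x = g y" for x y
    using that glue_vert_eq_iff[of e1 en x y] by auto
  show False
  proof (cases "fst p = src Q \<alpha>")
    case True
    then have ne2: "pend Q p \<noteq> tgt Q \<alpha>" using npar by blast
    then have ends: "pend Q p \<in> {e1, en}" "tgt Q \<alpha> \<in> {e1, en}" using geq[OF gt] by auto
    have "(pend Q p, src Q \<alpha>) \<in> conn Q" using conn_sym[OF cp] True by simp
    then have "(pend Q p, tgt Q \<alpha>) \<in> conn Q" using conn_trans ca by blast
    then show False using not_conn_ends[OF nsb ends] ne2 by simp
  next
    case False
    then have ends1: "fst p \<in> {e1, en}" "src Q \<alpha> \<in> {e1, en}" using geq[OF gs] by auto
    show False
    proof (cases "pend Q p = tgt Q \<alpha>")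
      case True
      have "(fst p, tgt Q \<alpha>) \<in> conn Q" using cp True by simp
      then have "(fst p, src Q \<alpha>) \<in> conn Q" using conn_trans conn_sym[OF ca] by blast
      then show False using not_conn_ends[OF nsb ends1] False by simp
    next
      case ne3: False
      then have ends2: "pend Q p \<in> {e1, en}" "tgt Q \<alpha> \<in> {e1, en}" using geq[OF gt] by auto
      have l\<alpha>: "src Q \<alpha> = tgt Q \<alpha>" using not_conn_ends[OF nsb ends1(2) ends2(2) ca] .
      have lp: "fst p = pend Q p" using not_conn_ends[OF nsb ends1(1) ends2(1) cp] .
      show False
      proof (cases "snd p = []")
        case True
        obtain c' where c': "c' \<in> arrs Q" "c' \<noteq> \<alpha>" "g (src Q c') = g (src Q \<alpha>) \<or> g (tgt Q c') = g (src Q \<alpha>)"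
          using other_arrow[OF \<alpha>A l\<alpha> ends1(2)] by blast
        then show False using k True by (auto simp: KB_iff)
      next
        case nt: False
        then obtain b where pbb: "p = (src Q b, [b])" "b \<in> arrs Q"
          using pb unfolding mem_basis_rad2 by auto
        have lb: "src Q b = tgt Q b" using lp pbb by simp
        have "has_loop Q (src Q \<alpha>)" using \<alpha>A l\<alpha> unfolding has_loop_def by auto
        moreover have "has_loop Q (fst p)" using pbb lb unfolding has_loop_def by auto
        ultimately show False using nl False ends1 by auto
      qed
    qed
  qed
qed

lemma KB_eq:
  assumes okc: "ok c" and nsb: "\<not> same_block Q e1 en" and nl: "\<not> (has_loop Q e1 \<and> has_loop Q en)"
  shows "KK c QB = st ` KK c Q"
proof (rule set_eqI, rule iffI)
  fix y assume yK: "y \<in> KK c QB"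
  then have "y \<in> QB1" using KK_sub by blast
  then consider "y \<in> st ` QA1" | "y \<in> st ` SP" using cover by blast
  then show "y \<in> st ` KK c Q"
  proof cases
    case 1
    then obtain x where x: "x \<in> QA1" "y = st x" by blast
    then have "x \<in> KK c Q" using K_equiv[OF okc x(1)] yK by simp
    then show ?thesis using x by blast
  next
    case 2 then show ?thesis using SP_KB_empty[OF nsb nl, of c] yK by blast
  qed
next
  fix y assume "y \<in> st ` KK c Q"
  then obtain x where x: "x \<in> KK c Q" "y = st x" by blast
  have "x \<in> QA1" using x(1) KK_sub by blast
  then show "y \<in> KK c QB" using K_equiv[OF okc] x by blast
qed

definition phi :: "('e \<times> ('v, 'e) path \<Rightarrow> 'k) \<Rightarrow> ('e \<times> ('v, 'e) path \<Rightarrow> 'k::field)" where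
  "phi f = (\<lambda>y. if y \<in> st ` QA1 then f (the_inv_into QA1 st y) else 0)"

lemma phi_st: "x \<in> QA1 \<Longrightarrow> phi f (st x) = f x"
  unfolding phi_def using the_inv_into_f_f[OF st_inj] by auto

lemma phi_out: "y \<notin> st ` QA1 \<Longrightarrow> phi f y = 0"
  unfolding phi_def by simp

lemma phi_add: "phi (f + h) = phi f + phi h"
  by (rule ext) (simp add: phi_def)

lemma phi_scale: "phi (fscale c f) = fscale c (phi f)"
  by (rule ext) (simp add: phi_def)

lemma phi_inj:
  assumes "f \<in> supported_on QA1" "h \<in> supported_on QA1" "phi f = phi h"
  shows "f = h"
proof
  fix z show "f z = h z"
  proof (cases "z \<in> QA1")
    case True
    then show ?thesis using phi_st[OF True, of f] phi_st[OF True, of h] assms(3) by simp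
  next
    case False
    then show ?thesis using supported_onD[OF assms(1)] supported_onD[OF assms(2)] by simp
  qed
qed

lemma Dm_supp: "Dm Q h \<in> supported_on QA1"
  unfolding supported_on_def Dm_def by auto

lemma phi_Dm: "phi (Dm Q (\<lambda>v. h (g v))) = (Dm QB h :: _ \<Rightarrow> 'k::field)"
proof
  fix y :: "'e \<times> ('v, 'e) path"
  show "phi (Dm Q (\<lambda>v. h (g v))) y = Dm QB h y"
  proof (cases "y \<in> st ` QA1")
    case True
    then obtain x where x: "x \<in> QA1" "y = st x" by blast
    obtain a p where xp: "x = (a, p)" by (cases x)
    have inB: "(a, sp p) \<in> QB1" using st_in[OF x(1)] by (simp add: xp)
    have "phi (Dm Q (\<lambda>v. h (g v))) y = Dm Q (\<lambda>v. h (g v)) x" using phi_st[OF x(1)] x(2) by simp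
    then show ?thesis using x inB by (simp add: xp Dm_def)
  next
    case False
    obtain a q where yq: "y = (a, q)" by (cases y)
    have "\<not> ((a, q) \<in> QB1 \<and> snd q = [a])"
    proof
      assume h: "(a, q) \<in> QB1 \<and> snd q = [a]"
      then have aA: "a \<in> arrs Q" and qq: "q = (g (src Q a), [a])" by (auto simp: B_iff)
      have "(a, (src Q a, [a])) \<in> QA1" using aA by (simp add: A_iff)
      moreover have "st (a, (src Q a, [a])) = y" using qq by (simp add: yq star_path_def)
      ultimately show False using False by blast
    qed
    then have "Dm QB h y = (0::'k)" by (auto simp: Dm_def yq)
    moreover have "phi (Dm Q (\<lambda>v. h (g v))) y = 0" using False by (rule phi_out)
    ultimately show ?thesis by simp
  qed
qed


lemma coef_star:
  assumes "fst p = fst \<eta>" "\<eta> \<in> basis Q (rad2_rels Q)"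
  shows "(repl_coeff QB (rad2_rels QB) b (sp \<gamma>) (sp p) (sp \<eta>) :: 'k::field) = repl_coeff Q (rad2_rels Q) b \<gamma> p \<eta>"
proof -
  have "{i. i < length (snd (sp p)) \<and> snd (sp p) ! i = b \<and> replace_at (sp p) i (sp \<gamma>) = sp \<eta>}
      = {i. i < length (snd p) \<and> snd p ! i = b \<and> replace_at p i \<gamma> = \<eta>}"
    using assms(1) by (auto simp: replace_at_def star_path_def prod_eq_iff)
  then show ?thesis unfolding repl_coeff_def using basis_star[OF assms(2)] assms(2) by simp
qed

lemma coef_zero:
  assumes u: "(c, p) \<in> QA1" and v: "(b, \<gamma>) \<in> QA1"
    and nz: "(repl_coeff QB (rad2_rels QB) b (sp \<gamma>) (sp p) \<eta> :: 'k::field) \<noteq> 0"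
  shows "(c, \<eta>) \<in> st ` QA1"
proof -
  let ?S = "{i. i < length (snd (sp p)) \<and> snd (sp p) ! i = b \<and> replace_at (sp p) i (sp \<gamma>) = \<eta>}"
  have "card ?S \<noteq> 0"
  proof
    assume c0: "card ?S = 0"
    have "(repl_coeff QB (rad2_rels QB) b (sp \<gamma>) (sp p) \<eta> :: 'k) = 0" unfolding repl_coeff_def c0 by simp
    then show False using nz by simp
  qed
  have "?S \<noteq> {}"
  proof
    assume "?S = {}"
    then have "card ?S = 0" by (simp only: card.empty)
    then show False using \<open>card ?S \<noteq> 0\<close> by simp
  qed
  then obtain i where i: "i \<in> ?S" by blast
  have il: "i < length (snd p)" and ib: "snd p ! i = b" and ir: "replace_at (sp p) i (sp \<gamma>) = \<eta>"
    using i by simp_all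
  have "snd p \<noteq> []" using il by auto
  then obtain b' where p: "p = (src Q c, [b'])" "src Q b' = src Q c" "tgt Q b' = tgt Q c"
    using u unfolding A_iff by auto
  have i0: "i = 0" using il p by simp
  have bb: "b' = b" using ib p i0 by simp
  have \<eta>: "\<eta> = (g (src Q c), snd \<gamma>)"
    using ir p i0 by (simp add: replace_at_def star_path_def)
  have cA: "c \<in> arrs Q" using u by (simp add: A_iff)
  have "(c, (src Q c, snd \<gamma>)) \<in> QA1"
    using v p bb cA by (auto simp: A_iff)
  moreover have "st (c, (src Q c, snd \<gamma>)) = (c, \<eta>)" using \<eta> by (simp add: star_path_def)
  ultimately show ?thesis by (metis image_eqI)
qed

lemma sum_restrict_st:
  assumes "\<And>u v. u \<notin> st ` QA1 \<or> v \<notin> st ` QA1 \<Longrightarrow> T u v = (0::'k::field)"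
  shows "(\<Sum>u\<in>QB1. \<Sum>v\<in>QB1. T u v) = (\<Sum>u\<in>QA1. \<Sum>v\<in>QA1. T (st u) (st v))"
proof -
  have sub: "st ` QA1 \<subseteq> QB1" using st_in by blast
  have inner: "(\<Sum>v\<in>QB1. T u v) = (\<Sum>v\<in>QA1. T u (st v))" for u
  proof -
    have "(\<Sum>v\<in>QB1. T u v) = (\<Sum>v\<in>st ` QA1. T u v)"
    proof (rule sum.mono_neutral_right[OF finite_QB1 sub], rule ballI)
    fix v assume "v \<in> QB1 - st ` QA1"
    then show "T u v = 0" using assms[of u v] by blast
  qed
    also have "\<dots> = (\<Sum>v\<in>QA1. T u (st v))" by (simp add: sum.reindex[OF st_inj])
    finally show ?thesis .
  qed
  have "(\<Sum>u\<in>QB1. \<Sum>v\<in>QB1. T u v) = (\<Sum>u\<in>st ` QA1. \<Sum>v\<in>QB1. T u v)"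
  proof (rule sum.mono_neutral_right[OF finite_QB1 sub], rule ballI)
    fix u assume "u \<in> QB1 - st ` QA1"
    then have "\<forall>v\<in>QB1. T u v = 0" using assms by blast
    then show "(\<Sum>v\<in>QB1. T u v) = 0" by (rule sum.neutral)
  qed
  also have "\<dots> = (\<Sum>u\<in>QA1. \<Sum>v\<in>QB1. T (st u) v)" by (simp add: sum.reindex[OF st_inj])
  also have "\<dots> = (\<Sum>u\<in>QA1. \<Sum>v\<in>QA1. T (st u) (st v))" by (simp add: inner)
  finally show ?thesis .
qed


lemma QA1_fst: "x \<in> QA1 \<Longrightarrow> fst (snd x) = src Q (fst x)"
  by (cases x) (auto simp: A_iff)

lemma QA1_basis: "x \<in> QA1 \<Longrightarrow> snd x \<in> basis Q (rad2_rels Q)"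
  by (cases x) (simp add: Q1B_def)

lemma bracket_phi:
  fixes f1 f2 :: "'e \<times> ('v, 'e) path \<Rightarrow> 'k::field"
  assumes s1: "f1 \<in> supported_on QA1" and s2: "f2 \<in> supported_on QA1"
  shows "bracket QB (rad2_rels QB) (phi f1) (phi f2) = phi (bracket Q (rad2_rels Q) f1 f2)"
proof
  fix z :: "'e \<times> ('v, 'e) path"
  obtain c \<eta> where z: "z = (c, \<eta>)" by (cases z)
  define TB where "TB u v = phi f1 u * phi f2 v *
         ((if c = fst u then (repl_coeff QB (rad2_rels QB) (fst v) (snd v) (snd u) \<eta> :: 'k) else 0)
        - (if c = fst v then repl_coeff QB (rad2_rels QB) (fst u) (snd u) (snd v) \<eta> else 0))" for u v
  have bB: "bracket QB (rad2_rels QB) (phi f1) (phi f2) z = (if (c, \<eta>) \<in> QB1 then (\<Sum>u\<in>QB1. \<Sum>v\<in>QB1. TB u v) else 0)"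
    by (simp add: bracket_def z TB_def)
  have rs: "(\<Sum>u\<in>QB1. \<Sum>v\<in>QB1. TB u v) = (\<Sum>u\<in>QA1. \<Sum>v\<in>QA1. TB (st u) (st v))"
    by (rule sum_restrict_st) (auto simp: TB_def phi_out)
  have TBst: "TB (st u) (st v) = f1 u * f2 v *
         ((if c = fst u then (repl_coeff QB (rad2_rels QB) (fst v) (sp (snd v)) (sp (snd u)) \<eta> :: 'k) else 0)
        - (if c = fst v then repl_coeff QB (rad2_rels QB) (fst u) (sp (snd u)) (sp (snd v)) \<eta> else 0))"
    if "u \<in> QA1" "v \<in> QA1" for u v
    using phi_st[OF that(1), of f1] phi_st[OF that(2), of f2] unfolding TB_def by (simp add: st_def)
  show "bracket QB (rad2_rels QB) (phi f1) (phi f2) z = phi (bracket Q (rad2_rels Q) f1 f2) z"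
  proof (cases "z \<in> st ` QA1")
    case True
    then obtain z0 where z0: "z0 \<in> QA1" "z = st z0" by blast
    obtain \<eta>0 where z0e: "z0 = (c, \<eta>0)" "\<eta> = sp \<eta>0" using z0 z by (cases z0) (simp add: st_def)
    have \<eta>0b: "\<eta>0 \<in> basis Q (rad2_rels Q)" using QA1_basis[OF z0(1)] z0e by simp
    have f\<eta>0: "fst \<eta>0 = src Q c" using QA1_fst[OF z0(1)] z0e by simp
    have inB: "(c, \<eta>) \<in> QB1" using st_in[OF z0(1)] z0e by (simp add: st_def)
    have eqT: "TB (st u) (st v) = f1 u * f2 v *
         ((if c = fst u then repl_coeff Q (rad2_rels Q) (fst v) (snd v) (snd u) \<eta>0 else 0)
        - (if c = fst v then repl_coeff Q (rad2_rels Q) (fst u) (snd u) (snd v) \<eta>0 else 0))"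
      if uv: "u \<in> QA1" "v \<in> QA1" for u v
    proof -
      have a1: "c = fst u \<Longrightarrow> (repl_coeff QB (rad2_rels QB) (fst v) (sp (snd v)) (sp (snd u)) \<eta> :: 'k)
                = repl_coeff Q (rad2_rels Q) (fst v) (snd v) (snd u) \<eta>0"
        using coef_star[OF _ \<eta>0b] QA1_fst[OF uv(1)] f\<eta>0 z0e(2) by simp
      have a2: "c = fst v \<Longrightarrow> (repl_coeff QB (rad2_rels QB) (fst u) (sp (snd u)) (sp (snd v)) \<eta> :: 'k)
                = repl_coeff Q (rad2_rels Q) (fst u) (snd u) (snd v) \<eta>0"
        using coef_star[OF _ \<eta>0b] QA1_fst[OF uv(2)] f\<eta>0 z0e(2) by simp
      show ?thesis using TBst[OF uv] a1 a2 by simp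
    qed
    have "bracket QB (rad2_rels QB) (phi f1) (phi f2) z = (\<Sum>u\<in>QA1. \<Sum>v\<in>QA1. TB (st u) (st v))"
      using bB rs inB by simp
    also have "\<dots> = bracket Q (rad2_rels Q) f1 f2 z0"
      using z0(1) by (simp add: bracket_def z0e eqT)
    also have "\<dots> = phi (bracket Q (rad2_rels Q) f1 f2) z" using phi_st[OF z0(1), of "bracket Q (rad2_rels Q) f1 f2"] z0(2) by simp
    finally show ?thesis .
  next
    case False
    have zero: "TB (st u) (st v) = 0" if uv: "u \<in> QA1" "v \<in> QA1" for u v
    proof -
      have a1: "(if c = fst u then (repl_coeff QB (rad2_rels QB) (fst v) (sp (snd v)) (sp (snd u)) \<eta> :: 'k) else 0) = 0"
      proof (cases "c = fst u")
        case True
        have "(c, snd u) \<in> QA1" using uv(1) True by simp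
        moreover have "(fst v, snd v) \<in> QA1" using uv(2) by simp
        ultimately show ?thesis using coef_zero False z by (metis (full_types))
      qed simp
      have a2: "(if c = fst v then (repl_coeff QB (rad2_rels QB) (fst u) (sp (snd u)) (sp (snd v)) \<eta> :: 'k) else 0) = 0"
      proof (cases "c = fst v")
        case True
        have "(c, snd v) \<in> QA1" using uv(2) True by simp
        moreover have "(fst u, snd u) \<in> QA1" using uv(1) by simp
        ultimately show ?thesis using coef_zero False z by (metis (full_types))
      qed simp
      show ?thesis using TBst[OF uv] a1 a2 by simp
    qed
    have "bracket QB (rad2_rels QB) (phi f1) (phi f2) z = 0"
      using bB rs zero by simp
    then show ?thesis using phi_out[OF False] by simp
  qed
qed


lemma Dm_diff_scale: "Dm Q (h - fscale k i) = Dm Q h - fscale k (Dm Q i :: _ \<Rightarrow> 'k::field)"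
  by (rule ext) (auto simp: Dm_def algebra_simps)

lemma zero_imB: "(0 :: 'e \<times> ('v, 'e) path \<Rightarrow> 'k::field) \<in> Dm QB ` supported_on (verts QB)"
proof -
  have "Dm QB (0 :: 'v \<Rightarrow> 'k) = 0" by (simp add: Dm_def fun_eq_iff split: prod.splits)
  moreover have "(0 :: 'v \<Rightarrow> 'k) \<in> supported_on (verts QB)" by (simp add: supported_on_def)
  ultimately show ?thesis by (metis image_eqI)
qed

lemma lie_iso:
  assumes okc: "ok ((2::'k::field) = 0)" and nsb: "\<not> same_block Q e1 en"
    and nl: "\<not> (has_loop Q e1 \<and> has_loop Q en)"
  shows "hh1_lie_iso TYPE('k) Q (rad2_rels Q) QB (glue_rels Q e1 en)"
proof -
  let ?c = "(2::'k) = 0"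
  have kA: "ker_delta1 Q (rad2_rels Q) = (supported_on (KK ?c Q) :: (_ \<Rightarrow> 'k) set)"
    by (rule ker_delta1_eq[OF wf])
  have kB: "ker_delta1 QB (rad2_rels QB) = (supported_on (st ` KK ?c Q) :: (_ \<Rightarrow> 'k) set)"
    unfolding ker_delta1_eq[OF wfB] KB_eq[OF okc nsb nl] ..
  have iA: "im_delta0 Q (rad2_rels Q) = (Dm Q ` supported_on (verts Q) :: (_ \<Rightarrow> 'k) set)"
    by (rule im_delta0_eq[OF wf])
  have iB: "im_delta0 QB (rad2_rels QB) = (Dm QB ` supported_on (verts QB) :: (_ \<Rightarrow> 'k) set)"
    by (rule im_delta0_eq[OF wfB])
  have suppA: "x \<in> supported_on QA1" if "x \<in> (supported_on (KK ?c Q) :: (_ \<Rightarrow> 'k) set)" for x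
    using that KK_sub[of ?c Q] unfolding supported_on_def by blast
  let ?i = "ind (conn Q `` {e1}) :: 'v \<Rightarrow> 'k"
  have i_e1: "?i e1 = 1" using equiv_class_self[OF equiv_conn[OF wf] e1V] by (simp add: ind_def)
  have i_en: "?i en = 0" using nsb by (simp add: ind_def same_block_def)
  have Dmi: "Dm Q ?i = (0 :: _ \<Rightarrow> 'k)" using i1_LC ker_Dm[OF wf, where 'k='k] by blast
  show ?thesis
    unfolding hh1_lie_iso_def glue_rels_eq kA kB iA iB
  proof (intro exI[of _ phi] conjI ballI allI)
    fix x :: "_ \<Rightarrow> 'k" assume x: "x \<in> supported_on (KK ?c Q)"
    show "phi x \<in> supported_on (st ` KK ?c Q)"
      unfolding supported_on_def
    proof (intro CollectI allI impI)
      fix y assume y: "y \<notin> st ` KK ?c Q"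
      show "phi x y = 0"
      proof (cases "y \<in> st ` QA1")
        case True
        then obtain z where z: "z \<in> QA1" "y = st z" by blast
        then have "z \<notin> KK ?c Q" using y by blast
        then show ?thesis using phi_st[OF z(1), of x] z(2) supported_onD[OF x] by simp
      qed (rule phi_out)
    qed
  next
    fix x y :: "_ \<Rightarrow> 'k"
    show "phi (x + y) = phi x + phi y" by (rule phi_add)
  next
    fix c and x :: "_ \<Rightarrow> 'k"
    show "phi (fscale c x) = fscale c (phi x)" by (rule phi_scale)
  next
    fix x :: "_ \<Rightarrow> 'k" assume x: "x \<in> supported_on (KK ?c Q)"
    show "(phi x \<in> Dm QB ` supported_on (verts QB)) = (x \<in> Dm Q ` supported_on (verts Q))"
    proof
      assume "phi x \<in> Dm QB ` supported_on (verts QB)"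
      then obtain hB where hB: "hB \<in> supported_on (verts QB)" "phi x = Dm QB hB" by blast
      define h0 where "h0 v = (if v \<in> verts Q then hB (g v) else 0)" for v
      have "phi (Dm Q (\<lambda>v. hB (g v))) = phi x" using phi_Dm hB(2) by simp
      then have "x = Dm Q (\<lambda>v. hB (g v))"
        using phi_inj[OF suppA[OF x] Dm_supp] by simp
      also have "\<dots> = Dm Q h0" by (rule Dm_cong[OF wf]) (simp add: h0_def)
      finally show "x \<in> Dm Q ` supported_on (verts Q)" by (simp add: h0_def supported_on_def)
    next
      assume "x \<in> Dm Q ` supported_on (verts Q)"
      then obtain h where h: "h \<in> supported_on (verts Q)" "x = Dm Q h" by blast
      define h' where "h' = h - fscale (h e1 - h en) ?i"
      have Dh': "Dm Q h' = Dm Q h" unfolding h'_def Dm_diff_scale Dmi by (simp add: fscale_def fun_eq_iff)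
      have h'e: "h' e1 = h' en" using i_e1 i_en by (simp add: h'_def)
      define hB where "hB w = (if w \<in> verts QB then h' w else 0)" for w
      have hg: "hB (g v) = h' v" if "v \<in> verts Q" for v
        using that h'e imageI[OF that, of g] by (cases "v = en") (auto simp: hB_def g_other)
      have "Dm Q (\<lambda>v. hB (g v)) = Dm Q h'" by (rule Dm_cong[OF wf]) (simp add: hg)
      then have "phi x = Dm QB hB" using phi_Dm[of hB] Dh' h(2) by simp
      moreover have "hB \<in> supported_on (verts QB)" by (simp add: hB_def supported_on_def)
      ultimately show "phi x \<in> Dm QB ` supported_on (verts QB)" by blast
    qed
  next
    fix y :: "_ \<Rightarrow> 'k" assume y: "y \<in> supported_on (st ` KK ?c Q)"
    define x where "x z = (if z \<in> QA1 then y (st z) else 0)" for z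
    have xK: "x \<in> supported_on (KK ?c Q)"
      unfolding supported_on_def
    proof (intro CollectI allI impI)
      fix z assume z: "z \<notin> KK ?c Q"
      show "x z = 0"
      proof (cases "z \<in> QA1")
        case True
        then have "st z \<notin> KK ?c QB" using K_equiv[OF okc True] z by simp
        then have "st z \<notin> st ` KK ?c Q" using KB_eq[OF okc nsb nl] by simp
        then show ?thesis using supported_onD[OF y] by (simp add: x_def)
      qed (simp add: x_def)
    qed
    have "phi x = y"
    proof
      fix w show "phi x w = y w"
      proof (cases "w \<in> st ` QA1")
        case True
        then obtain z where z: "z \<in> QA1" "w = st z" by blast
        then show ?thesis using phi_st[OF z(1), of x] by (simp add: x_def)
      next
        case False
        then have "w \<notin> st ` KK ?c Q" using KK_sub[of ?c Q] by blast
        then show ?thesis using supported_onD[OF y] phi_out[OF False] by simp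
      qed
    qed
    then have "phi x - y \<in> Dm QB ` supported_on (verts QB)" using zero_imB by simp
    then show "\<exists>x\<in>supported_on (KK ?c Q). phi x - y \<in> Dm QB ` supported_on (verts QB)"
      using xK by blast
  next
    fix x y :: "_ \<Rightarrow> 'k" assume x: "x \<in> supported_on (KK ?c Q)" and y: "y \<in> supported_on (KK ?c Q)"
    have "bracket QB (rad2_rels QB) (phi x) (phi y) - phi (bracket Q (rad2_rels Q) x y) = 0"
      using bracket_phi[OF suppA[OF x] suppA[OF y]] by simp
    then show "bracket QB (rad2_rels QB) (phi x) (phi y) - phi (bracket Q (rad2_rels Q) x y)
        \<in> Dm QB ` supported_on (verts QB)" using zero_imB by simp
  qed
qed

end


theorem corollary3p26:
  fixes Q :: "('v, 'a) quiver" and e1 en :: 'v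
  assumes "finite (verts Q)" and "finite (arrs Q)"
    and "\<forall>a\<in>arrs Q. src Q a \<in> verts Q \<and> tgt Q a \<in> verts Q"
    and "e1 \<in> verts Q" and "en \<in> verts Q" and "e1 \<noteq> en"
    and "\<exists>a\<in>arrs Q. src Q a = e1 \<or> tgt Q a = e1"
    and "\<exists>a\<in>arrs Q. src Q a = en \<or> tgt Q a = en"
  defines "QB \<equiv> glue_quiver Q e1 en" and "ZA \<equiv> rad2_rels Q" and "ZB' \<equiv> glue_rels Q e1 en"
  defines "dA \<equiv> hh1_dim TYPE('k::field) Q ZA" and "dB \<equiv> hh1_dim TYPE('k) QB ZB'"
    and "s \<equiv> int (kspp TYPE('k) Q e1 en)"
    and "cA \<equiv> int (num_components Q)" and "cB \<equiv> int (num_components QB)"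
    and "good \<equiv> (2::'k) \<noteq> 0 \<or> same_block Q e1 en
                 \<or> (\<not> same_block Q e1 en \<and> \<not> block_is_dual_numbers Q e1
                    \<and> \<not> block_is_dual_numbers Q en)"
  shows "good \<longrightarrow>
           (dA = dB - 1 - s - cB + cA)
         \<and> (same_block Q e1 en \<longrightarrow> dA = dB - 1 - s)
         \<and> (\<not> same_block Q e1 en \<longrightarrow>
               dA = dB - s
             \<and> (\<not> (has_loop Q e1 \<and> has_loop Q en) \<longrightarrow> hh1_lie_iso TYPE('k) Q ZA QB ZB'))"
proof (intro impI)
  assume gd: "good"
  have wf: "wfq Q" using assms(1-3) by (simp add: wfq_def)
  interpret glue Q e1 en
    by unfold_locales (use wf assms(4-8) in auto)
  have g0: "(2::'k) \<noteq> 0 \<or> same_block Q e1 en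
                 \<or> (\<not> same_block Q e1 en \<and> \<not> block_is_dual_numbers Q e1
                    \<and> \<not> block_is_dual_numbers Q en)" using gd by (simp add: assms(17))
  have okc: "ok ((2::'k) = 0)" by (rule good_ok[OF g0])
  have main: "dA = dB - 1 - s - cB + cA"
    unfolding assms(9-16) by (rule dims_main[OF okc])
  show "(dA = dB - 1 - s - cB + cA)
         \<and> (same_block Q e1 en \<longrightarrow> dA = dB - 1 - s)
         \<and> (\<not> same_block Q e1 en \<longrightarrow>
               dA = dB - s
             \<and> (\<not> (has_loop Q e1 \<and> has_loop Q en) \<longrightarrow> hh1_lie_iso TYPE('k) Q ZA QB ZB'))"
  proof (intro conjI impI)
    show "dA = dB - 1 - s - cB + cA" by (rule main)
  next
    assume sb: "same_block Q e1 en"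
    have "cB = cA" unfolding assms(15,16) assms(9) using comp_same[OF sb] by simp
    then show "dA = dB - 1 - s" using main by simp
  next
    assume nsb: "\<not> same_block Q e1 en"
    have "cA = cB + 1" unfolding assms(15,16) assms(9) using comp_diff[OF nsb] by simp
    then show "dA = dB - s" using main by simp
  next
    assume nsb: "\<not> same_block Q e1 en" and nl: "\<not> (has_loop Q e1 \<and> has_loop Q en)"
    show "hh1_lie_iso TYPE('k) Q ZA QB ZB'"
      unfolding assms(9-11) by (rule lie_iso[OF okc nsb nl])
  qed
qed

end
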